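(* In $\Gamma_\mathbb{F}(\mathbb{A})$, let $\alpha$ be a non-degenerate primitive path which is not orthogonal. Then there exists a line $N$ admissible for $\alpha$ such that the orthogonal shift $\beta=\sigma^N_\perp(\alpha)$ has line-invariant $\ell(\beta)\neq-1$.
   Context: $\mathbb{H}$, $\mathbb{O}$ are the real quaternions and octonions, $\mathbb{C}\subset\mathbb{H}\subset\mathbb{O}$. Let $(\mathbb{F},\mathbb{A})$ be $(\mathbb{R},\mathbb{H})$ or $(\mathbb{C},\mathbb{O})$; $\mathbb{A},\mathbb{O}$ are right $\mathbb{F}$-vector spaces via right multiplication by $\mathbb{F}$. $(x|y)_\mathbb{R}=\mathrm{Re}(\bar xy)$; $(x|y)=(x|y)_\mathbb{R}$ if $\mathbb{F}=\mathbb{R}$, and for $\mathbb{F}=\mathbb{C}$, $(x|y)$ is the $\mathbb{C}$-component of $\bar xy$ in $\mathbb{O}=\mathbb{C}\oplus\mathbb{C}^{\perp}$. $x\perp y$ means $(x|y)=0$; for points $[x]\perp[y]$ means $x\perp y$. $\mathrm{Pu}_\mathbb{F}(\mathbb{B})$ is the real-orthogonal complement of $\mathbb{F}$ in $\mathbb{B}$. Sharp $\mathbb{F}$-morphisms $\mathbb{A}\to\mathbb{O}$: $\mathbb{F}$-linear multiplicative maps preserving $(\cdot|\cdot)$. $\Gamma_\mathbb{F}(\mathbb{A})$: points are 1-dim $\mathbb{F}$-subspaces $[x]$ of $\mathrm{Pu}_\mathbb{F}(\mathbb{A})$; lines are $[x,u]=\{(xt,ut):t\in\mathbb{F}^*\}$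 with $x\in\mathrm{Pu}_\mathbb{F}(\mathbb{A})$, $u\in\mathrm{Pu}_\mathbb{F}(\mathbb{O})$, $|x|=|u|\ne0$; planes are sharp $\mathbb{F}$-morphisms $\phi:\mathbb{A}\to\mathbb{O}$; every point is incident with every plane, $[y]$ is incident with $[x,u]$ iff $(x|y)=0$, $[x,u]$ is incident with $\phi$ iff $\phi(x)=u$. A primitive path is a closed path $(p,L,q,M,p)$ ($p,q$ points, $L,M$ lines), degenerate if $p=q$ or $L=M$, orthogonal if $p\perp q$. In a primitive path $L$ and $M$ have the same point set, so one may write $L=[a,u]$, $M=[a,v]$ with the same $a$; the line-invariant is $\ell(\alpha)=(L|M):=(u|v)/(|u||v|)\in\mathbb{F}$ (independent of the choice of $a$). For non-degenerate $\alpha=(p,L,q,M,p)$, a line $N$ is admissible if it is incident with $q$ and coplanar with both $L$ and $M$; for a point $r$ of $N$, with $\xi$ the plane on $N,L$, $\chi$ the plane on $N,M$, $L'$ the line of $\xi$ through $p,r$, $M'$ the line of $\chi$ through $p,r$, the shift is $\sigma^N_{q\to r}(\alpha)=(p,L',r,M',p)$. The orthogonal shift $\sigma^N_\perp(\alpha)$ is the shift $\sigma^N_{q\to r}(\alpha)$ where $r$ is the unique point of $N$ with $p\perp r$. *)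

theory Defs
  imports "HOL-Analysis.Analysis"
begin

text \<open>Cayley--Dickson product: (a,b)(c,d) = (ac - conj(d) b, d a + b conj(c)),
  conjugate (a,b)* = (conj a, -b).  Norm, addition and real scaling are the
  componentwise (Euclidean) ones from Product_Vector.\<close>

type_synonym quat = "complex \<times> complex"
type_synonym oct = "quat \<times> quat"

definition qconj :: "quat \<Rightarrow> quat" where
  "qconj x = (cnj (fst x), - snd x)"

definition qmul :: "quat \<Rightarrow> quat \<Rightarrow> quat" where
  "qmul x y = (fst x * fst y - cnj (snd y) * snd x, snd y * fst x + snd x * cnj (fst y))"

definition oconj :: "oct \<Rightarrow> oct" where
  "oconj x = (qconj (fst x), - snd x)"

definition omul :: "oct \<Rightarrow> oct \<Rightarrow> oct" where
  "omul x y = (qmul (fst x) (fst y) - qmul (qconj (snd y)) (snd x),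
               qmul (snd y) (fst x) + qmul (snd x) (qconj (fst y)))"

definition oRe :: "oct \<Rightarrow> real" where
  "oRe x = Re (fst (fst x))"

definition ofC :: "complex \<Rightarrow> oct" where
  "ofC z = ((z, 0), (0, 0))"

definition ofR :: "real \<Rightarrow> oct" where
  "ofR r = ofC (complex_of_real r)"

definition Hset :: "oct set" where
  "Hset = {(q, 0) | q. True}"

section \<open>The two cases (F,A) = (R,H) or (C,O)\<close>

datatype FA = RH | CO

definition Fsc :: "FA \<Rightarrow> oct set" where
  "Fsc c = (case c of RH \<Rightarrow> range ofR | CO \<Rightarrow> range ofC)"

definition Aset :: "FA \<Rightarrow> oct set" where
  "Aset c = (case c of RH \<Rightarrow> Hset | CO \<Rightarrow> UNIV)"

text \<open>The F-valued form (x|y): Re(conj x y) if F = R; the C-component of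
  conj x y in O = C \<oplus> C^perp if F = C.  Values are taken inside O (in F).\<close>
definition ip :: "FA \<Rightarrow> oct \<Rightarrow> oct \<Rightarrow> oct" where
  "ip c x y = (case c of
      RH \<Rightarrow> ofR (oRe (omul (oconj x) y))
    | CO \<Rightarrow> ofC (fst (fst (omul (oconj x) y))))"

definition Pu :: "FA \<Rightarrow> oct set \<Rightarrow> oct set" where
  "Pu c B = {x \<in> B. \<forall>t \<in> Fsc c. oRe (omul (oconj t) x) = 0}"

text \<open>Sharp F-morphisms A \<rightarrow> O (as functions on O, vanishing off A).\<close>
definition sharp :: "FA \<Rightarrow> (oct \<Rightarrow> oct) \<Rightarrow> bool" where
  "sharp c \<phi> \<longleftrightarrow>
     (\<forall>x \<in> Aset c. \<forall>y \<in> Aset c. \<phi> (x + y) = \<phi> x + \<phi> y) \<and>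
     (\<forall>x \<in> Aset c. \<forall>t \<in> Fsc c. \<phi> (omul x t) = omul (\<phi> x) t) \<and>
     (\<forall>x \<in> Aset c. \<forall>y \<in> Aset c. \<phi> (omul x y) = omul (\<phi> x) (\<phi> y)) \<and>
     (\<forall>x \<in> Aset c. \<forall>y \<in> Aset c. ip c (\<phi> x) (\<phi> y) = ip c x y) \<and>
     (\<forall>x. x \<notin> Aset c \<longrightarrow> \<phi> x = 0)"

definition pt :: "FA \<Rightarrow> oct \<Rightarrow> oct set" where
  "pt c y = {omul y t | t. t \<in> Fsc c}"

definition line :: "FA \<Rightarrow> oct \<Rightarrow> oct \<Rightarrow> (oct \<times> oct) set" where
  "line c x u = {(omul x t, omul u t) | t. t \<in> Fsc c \<and> t \<noteq> 0}"

definition is_point :: "FA \<Rightarrow> oct set \<Rightarrow> bool" where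
  "is_point c P \<longleftrightarrow> (\<exists>y \<in> Pu c (Aset c). y \<noteq> 0 \<and> P = pt c y)"

definition is_line :: "FA \<Rightarrow> (oct \<times> oct) set \<Rightarrow> bool" where
  "is_line c L \<longleftrightarrow> (\<exists>x u. x \<in> Pu c (Aset c) \<and> u \<in> Pu c UNIV \<and>
       norm x = norm u \<and> x \<noteq> 0 \<and> L = line c x u)"

definition inc_pl :: "FA \<Rightarrow> oct set \<Rightarrow> (oct \<times> oct) set \<Rightarrow> bool" where
  "inc_pl c P L \<longleftrightarrow> is_point c P \<and> is_line c L \<and>
     (\<exists>x u y. L = line c x u \<and> P = pt c y \<and> ip c x y = 0)"

definition inc_lp :: "FA \<Rightarrow> (oct \<times> oct) set \<Rightarrow> (oct \<Rightarrow> oct) \<Rightarrow> bool" where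
  "inc_lp c L \<phi> \<longleftrightarrow> is_line c L \<and> sharp c \<phi> \<and>
     (\<exists>x u. L = line c x u \<and> \<phi> x = u)"

definition perp :: "FA \<Rightarrow> oct set \<Rightarrow> oct set \<Rightarrow> bool" where
  "perp c P Q \<longleftrightarrow> (\<exists>x y. P = pt c x \<and> Q = pt c y \<and> ip c x y = 0)"

definition primitive :: "FA \<Rightarrow> oct set \<Rightarrow> (oct \<times> oct) set \<Rightarrow> oct set \<Rightarrow> (oct \<times> oct) set \<Rightarrow> bool" where
  "primitive c p L q M \<longleftrightarrow> is_point c p \<and> is_point c q \<and> is_line c L \<and> is_line c M \<and>
     inc_pl c p L \<and> inc_pl c q L \<and> inc_pl c q M \<and> inc_pl c p M"

definition degenerate :: "oct set \<Rightarrow> (oct \<times> oct) set \<Rightarrow> oct set \<Rightarrow> (oct \<times> oct) set \<Rightarrow> bool" where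
  "degenerate p L q M \<longleftrightarrow> p = q \<or> L = M"

definition linv :: "FA \<Rightarrow> (oct \<times> oct) set \<Rightarrow> (oct \<times> oct) set \<Rightarrow> oct" where
  "linv c L M = (SOME l. \<exists>a u v. L = line c a u \<and> M = line c a v \<and>
       l = scaleR (1 / (norm u * norm v)) (ip c u v))"

definition coplanar :: "FA \<Rightarrow> (oct \<times> oct) set \<Rightarrow> (oct \<times> oct) set \<Rightarrow> bool" where
  "coplanar c N L \<longleftrightarrow> (\<exists>\<phi>. inc_lp c N \<phi> \<and> inc_lp c L \<phi>)"

definition admissible :: "FA \<Rightarrow> oct set \<Rightarrow> (oct \<times> oct) set \<Rightarrow> oct set \<Rightarrow> (oct \<times> oct) set
    \<Rightarrow> (oct \<times> oct) set \<Rightarrow> bool" where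
  "admissible c p L q M N \<longleftrightarrow> is_line c N \<and> inc_pl c q N \<and> coplanar c N L \<and> coplanar c N M"

text \<open>Shift sigma^N_{q \<rightarrow> r}(p,L,q,M,p) = (p,L',r,M',p); returned as (L', r, M').\<close>
definition shift :: "FA \<Rightarrow> oct set \<Rightarrow> (oct \<times> oct) set \<Rightarrow> oct set \<Rightarrow> (oct \<times> oct) set
    \<Rightarrow> (oct \<times> oct) set \<Rightarrow> oct set \<Rightarrow> (oct \<times> oct) set \<times> oct set \<times> (oct \<times> oct) set" where
  "shift c p L q M N r =
    (let xi = (THE xi. inc_lp c N xi \<and> inc_lp c L xi);
         ch = (THE ch. inc_lp c N ch \<and> inc_lp c M ch);
         L' = (THE L'. inc_lp c L' xi \<and> inc_pl c p L' \<and> inc_pl c r L');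
         M' = (THE M'. inc_lp c M' ch \<and> inc_pl c p M' \<and> inc_pl c r M')
     in (L', r, M'))"

definition orth_shift :: "FA \<Rightarrow> oct set \<Rightarrow> (oct \<times> oct) set \<Rightarrow> oct set \<Rightarrow> (oct \<times> oct) set
    \<Rightarrow> (oct \<times> oct) set \<Rightarrow> (oct \<times> oct) set \<times> oct set \<times> (oct \<times> oct) set" where
  "orth_shift c p L q M N = shift c p L q M N (THE r. inc_pl c r N \<and> perp c p r)"

end

theory Submission
  imports Defs
begin


lemma omul_c: "omul ((a0,a1),(a2,a3)) ((b0,b1),(b2,b3)) =
  ((a0*b0 - cnj b1*a1 - cnj b2*a2 - cnj a3*b3, b1*a0 + a1*cnj b0 - a3*cnj b2 + b3*cnj a2),
   (b2*a0 - cnj a1*b3 + a2*cnj b0 + cnj b1*a3, a1*b2 + b3*cnj a0 - b1*a2 + a3*b0))"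
  by (simp add: omul_def qmul_def qconj_def algebra_simps)

lemma oconj_c: "oconj ((a0,a1),(a2,a3)) = ((cnj a0, -a1),(-a2,-a3))"
  by (simp add: oconj_def qconj_def)

lemma ofC_c: "ofC z = ((z,0),(0,0))" by (simp add: ofC_def)

definition sm :: "oct \<Rightarrow> complex \<Rightarrow> oct" where "sm x z = omul x (ofC z)"

lemma sm_c: "sm ((a0,a1),(a2,a3)) z = ((a0*z, a1*cnj z),(a2*cnj z, a3*z))"
  by (simp add: sm_def ofC_c omul_c)

lemma oct_cases: obtains a0 a1 a2 a3 where "x = ((a0,a1),(a2,a3))"
  by (metis prod.collapse)

lemma onorm_c: "complex_of_real ((norm (((a0,a1),(a2,a3))::oct))^2) = a0*cnj a0 + a1*cnj a1 + a2*cnj a2 + a3*cnj a3"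
  by (simp add: norm_Pair flip: complex_norm_square)

lemma onorm_c': "(complex_of_real (norm (((a0,a1),(a2,a3))::oct)))^2 = a0*cnj a0 + a1*cnj a1 + a2*cnj a2 + a3*cnj a3"
  by (metis of_real_power onorm_c)

lemma norm_sq_real: "(norm (((a0,a1),(a2,a3))::oct))^2 = (Re a0)^2 + (Im a0)^2 + (Re a1)^2 + (Im a1)^2 + (Re a2)^2 + (Im a2)^2 + (Re a3)^2 + (Im a3)^2"
  by (simp add: norm_Pair cmod_def)

lemma inner_c: "inner (((a0,a1),(a2,a3))::oct) ((b0,b1),(b2,b3)) = Re (cnj a0*b0 + cnj a1*b1 + cnj a2*b2 + cnj a3*b3)"
  by (simp add: inner_complex_def)

lemmas C = omul_c oconj_c ofC_c sm_c

lemma norm_mult_sq: "norm (omul x y)^2 = norm x ^2 * norm y^2"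
proof -
  obtain a0 a1 a2 a3 where x: "x = ((a0,a1),(a2,a3))" by (rule oct_cases)
  obtain b0 b1 b2 b3 where y: "y = ((b0,b1),(b2,b3))" by (rule oct_cases)
  have "complex_of_real (norm (omul x y)^2) = complex_of_real (norm x ^2) * complex_of_real (norm y^2)"
    unfolding x y omul_c onorm_c by (simp add: algebra_simps)
  then show ?thesis by (metis of_real_eq_iff of_real_mult)
qed

lemma alt_left: "omul x (omul x y) = omul (omul x x) y"
  by (cases x; cases y) (auto simp: omul_def qmul_def qconj_def algebra_simps)
lemma alt_right: "omul (omul y x) x = omul y (omul x x)"
  by (cases x; cases y) (auto simp: omul_def qmul_def qconj_def algebra_simps)

lemma mul_conj: "omul x (oconj x) = ofC (of_real (norm x^2))"
proof -
  obtain a0 a1 a2 a3 where x: "x = ((a0,a1),(a2,a3))" by (rule oct_cases)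
  show ?thesis unfolding x onorm_c C by (simp add: algebra_simps)
qed


definition FS :: "FA \<Rightarrow> complex \<Rightarrow> bool" where "FS c z \<longleftrightarrow> c = CO \<or> Im z = 0"
definition Qc :: "FA \<Rightarrow> oct \<Rightarrow> bool" where
  "Qc c x \<longleftrightarrow> (case c of RH \<Rightarrow> Re (fst (fst x)) = 0 | CO \<Rightarrow> fst (fst x) = 0)"
definition hC :: "FA \<Rightarrow> oct \<Rightarrow> oct \<Rightarrow> complex" where
  "hC c x y = (case c of RH \<Rightarrow> of_real (Re (fst (fst (omul (oconj x) y)))) | CO \<Rightarrow> fst (fst (omul (oconj x) y)))"

lemma G_c: "fst (fst (omul (oconj ((a0,a1),(a2,a3))) ((b0,b1),(b2,b3)))) = cnj a0*b0 + a1*cnj b1 + a2*cnj b2 + cnj a3*b3"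
  by (simp add: C)

lemma ofR_eq: "ofR r = ofC (of_real r)" by (simp add: ofR_def)

lemma ofC_inj[simp]: "ofC x = ofC y \<longleftrightarrow> x = y" by (simp add: ofC_c)
lemma ofC_0[simp]: "ofC 0 = 0" by (simp add: ofC_c zero_prod_def)

lemma Fsc_eq: "Fsc c = ofC ` {z. FS c z}"
proof (cases c)
  case RH
  have "range ofR = ofC ` {z. Im z = 0}"
    apply (auto simp: ofR_eq image_def)
    by (metis complex_is_Real_iff Reals_cases)
  then show ?thesis using RH by (simp add: Fsc_def FS_def)
qed (simp add: Fsc_def FS_def)

lemma ip_eq: "ip c x y = ofC (hC c x y)"
  by (cases c) (simp_all add: ip_def hC_def ofR_eq oRe_def)

lemma oRe_ofC_mul: "oRe (omul (oconj (ofC z)) x) = Re (cnj z * fst (fst x))"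
  by (cases x rule: oct_cases) (simp add: oRe_def C)

lemma aux1: "(\<forall>t::complex. Im t = 0 \<longrightarrow> Re t = 0) = False"
  by (auto intro!: exI[of _ 1])

lemma aux2: "(\<forall>t::complex. Re t * a + Im t * b = 0) \<longleftrightarrow> a = 0 \<and> b = 0"
proof
  assume h: "\<forall>t::complex. Re t * a + Im t * b = 0"
  from h[rule_format, of 1] h[rule_format, of \<i>] show "a = 0 \<and> b = 0" by simp
qed auto

lemma Pu_eq: "Pu c B = {x \<in> B. Qc c x}"
  by (cases c) (simp_all add: Pu_def Qc_def Fsc_eq FS_def oRe_ofC_mul aux1 aux2 complex_eq_iff)

lemma Aset_iff: "x \<in> Aset c \<longleftrightarrow> (c = CO \<or> snd x = 0)"
  by (cases c) (auto simp: Aset_def Hset_def, metis prod.collapse)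


lemma hC_c: "hC c (((a0,a1),(a2,a3))) ((b0,b1),(b2,b3)) =
  (case c of RH \<Rightarrow> of_real (Re (cnj a0*b0 + a1*cnj b1 + a2*cnj b2 + cnj a3*b3)) | CO \<Rightarrow> cnj a0*b0 + a1*cnj b1 + a2*cnj b2 + cnj a3*b3)"
  by (simp only: hC_def G_c)

lemma FS_real: "FS RH t \<Longrightarrow> t = of_real (Re t)"
  by (simp add: FS_def complex_eq_iff)

lemma FS_RH_E: assumes "FS RH t" obtains r where "t = of_real r"
  using assms by (metis FS_real)


lemma hC_add_right: "hC c x (y + z) = hC c x y + hC c x z"
  by (cases x rule: oct_cases; cases y rule: oct_cases; cases z rule: oct_cases; cases c) (simp_all add: hC_c algebra_simps)
lemma hC_add_left: "hC c (x + y) z = hC c x z + hC c y z"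
  by (cases x rule: oct_cases; cases y rule: oct_cases; cases z rule: oct_cases; cases c) (simp_all add: hC_c algebra_simps)
lemma hC_minus_right: "hC c x (- y) = - hC c x y"
  by (cases x rule: oct_cases; cases y rule: oct_cases; cases c) (simp_all add: hC_c algebra_simps)
lemma hC_minus_left: "hC c (- x) y = - hC c x y"
  by (cases x rule: oct_cases; cases y rule: oct_cases; cases c) (simp_all add: hC_c algebra_simps)
lemma hC_diff_right: "hC c x (y - z) = hC c x y - hC c x z"
  by (metis diff_conv_add_uminus hC_add_right hC_minus_right)
lemma hC_diff_left: "hC c (x - y) z = hC c x z - hC c y z"
  by (metis diff_conv_add_uminus hC_add_left hC_minus_left)
lemma hC_zero_right[simp]: "hC c x 0 = 0"
  by (metis add.right_neutral add_cancel_right_right hC_add_right)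
lemma hC_zero_left[simp]: "hC c 0 x = 0"
  by (metis add.right_neutral add_cancel_right_right hC_add_left)

lemma hC_sm_right: "FS c t \<Longrightarrow> hC c x (sm y t) = hC c x y * t"
  by (cases x rule: oct_cases; cases y rule: oct_cases; cases c) (auto elim!: FS_RH_E simp: hC_c sm_c algebra_simps)
lemma hC_sm_left: "FS c t \<Longrightarrow> hC c (sm x t) y = cnj t * hC c x y"
  by (cases x rule: oct_cases; cases y rule: oct_cases; cases c) (auto elim!: FS_RH_E simp: hC_c sm_c algebra_simps)

lemma hC_sym: "hC c y x = cnj (hC c x y)"
  by (cases x rule: oct_cases; cases y rule: oct_cases; cases c) (simp_all add: hC_c algebra_simps)

lemma hC_self: "hC c x x = of_real (norm x ^2)"
proof (cases x rule: oct_cases)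
  case (1 a0 a1 a2 a3)
  show ?thesis unfolding 1 hC_c onorm_c by (cases c) (simp_all add: complex_eq_iff algebra_simps)
qed

lemma Re_hC: "Re (hC c x y) = inner x y"
  by (cases x rule: oct_cases; cases y rule: oct_cases; cases c) (simp_all add: hC_c inner_c inner_complex_def algebra_simps)

lemma FS_hC: "FS c (hC c x y)"
  by (cases c) (simp_all add: FS_def hC_def)


lemma plus_c: "((a0,a1),(a2,a3)) + ((b0,b1),(b2,b3)) = (((a0+b0,a1+b1),(a2+b2,a3+b3))::oct)" by simp
lemma minus_c: "- ((a0,a1),(a2,a3)) = (((-a0,-a1),(-a2,-a3))::oct)" by simp
lemma zero_c: "(0::oct) = ((0,0),(0,0))" by (simp add: zero_prod_def)

lemma sm_sm: "sm (sm x t) s = sm x (t * s)"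
  by (cases x rule: oct_cases) (simp add: sm_c algebra_simps)
lemma sm_add: "sm (x + y) t = sm x t + sm y t"
  by (cases x rule: oct_cases; cases y rule: oct_cases) (simp add: sm_c algebra_simps)
lemma sm_add2: "sm x (t + s) = sm x t + sm x s"
  by (cases x rule: oct_cases) (simp add: sm_c algebra_simps)
lemma sm_1[simp]: "sm x 1 = x"
  by (cases x rule: oct_cases) (simp add: sm_c)
lemma sm_0[simp]: "sm x 0 = 0"
  by (cases x rule: oct_cases) (simp add: sm_c zero_c)
lemma sm_zero[simp]: "sm 0 t = 0"
  by (simp add: sm_c zero_c)
lemma sm_minus: "sm (- x) t = - sm x t"
  by (cases x rule: oct_cases) (simp add: sm_c)
lemma sm_minus2: "sm x (- t) = - sm x t"
  by (cases x rule: oct_cases) (simp add: sm_c)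
lemma sm_diff: "sm (x - y) t = sm x t - sm y t"
  by (metis diff_conv_add_uminus sm_add sm_minus)
lemma sm_ofC: "sm (ofC a) t = ofC (a * t)"
  by (simp add: sm_c ofC_c)
lemma scaleR_sm: "scaleR r x = sm x (of_real r)"
  by (cases x rule: oct_cases) (simp add: sm_c scaleR_conv_of_real mult.commute)
lemma ofC_add: "ofC (a + b) = ofC a + ofC b" by (simp add: ofC_c)
lemma ofC_minus: "ofC (- a) = - ofC a" by (simp add: ofC_c)
lemma omul_ofC_ofC: "omul (ofC a) (ofC b) = ofC (a * b)" by (simp add: C)
lemma omul_one_left[simp]: "omul (ofC 1) x = x"
  by (cases x rule: oct_cases) (simp add: C)
lemma omul_one_right[simp]: "omul x (ofC 1) = x"
  by (cases x rule: oct_cases) (simp add: C)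

lemma norm_sm: "norm (sm x t) = norm x * cmod t"
proof -
  obtain a0 a1 a2 a3 where x: "x = ((a0,a1),(a2,a3))" by (rule oct_cases)
  have "(norm (sm x t))^2 = (norm x * cmod t)^2"
    unfolding x sm_c norm_sq_real power_mult_distrib cmod_power2 by (simp add: algebra_simps power2_eq_square)
  then show ?thesis by (simp add: power2_eq_iff_nonneg)
qed

lemma sm_cancel: "x \<noteq> 0 \<Longrightarrow> sm x t = sm x s \<Longrightarrow> t = s"
proof -
  assume "x \<noteq> 0" "sm x t = sm x s"
  then have "sm x (t - s) = 0" by (metis diff_conv_add_uminus right_minus sm_add2 sm_minus2)
  then have "norm x * cmod (t - s) = 0" by (metis norm_sm norm_zero)
  with \<open>x \<noteq> 0\<close> show "t = s" by simp
qed

lemma omul_add_left: "omul (x + y) z = omul x z + omul y z"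
  by (cases x rule: oct_cases; cases y rule: oct_cases; cases z rule: oct_cases) (simp add: omul_c algebra_simps)
lemma omul_add_right: "omul z (x + y) = omul z x + omul z y"
  by (cases x rule: oct_cases; cases y rule: oct_cases; cases z rule: oct_cases) (simp add: omul_c algebra_simps)
lemma omul_minus_left: "omul (- x) z = - omul x z"
  by (cases x rule: oct_cases; cases z rule: oct_cases) (simp add: omul_c algebra_simps)
lemma omul_minus_right: "omul z (- x) = - omul z x"
  by (cases x rule: oct_cases; cases z rule: oct_cases) (simp add: omul_c algebra_simps)
lemma omul_zero_left[simp]: "omul 0 z = 0"
  by (cases z rule: oct_cases) (simp add: omul_c zero_c)
lemma omul_zero_right[simp]: "omul z 0 = 0"
  by (cases z rule: oct_cases) (simp add: omul_c zero_c)
lemma omul_real_left: "omul (sm x (of_real r)) y = sm (omul x y) (of_real r)"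
  by (cases x rule: oct_cases; cases y rule: oct_cases) (simp add: omul_c sm_c algebra_simps)
lemma omul_real_right: "omul y (sm x (of_real r)) = sm (omul y x) (of_real r)"
  by (cases x rule: oct_cases; cases y rule: oct_cases) (simp add: omul_c sm_c algebra_simps)

lemma sq_pure: "Re (fst (fst x)) = 0 \<Longrightarrow> omul x x = ofC (- of_real (norm x ^2))"
proof (cases x rule: oct_cases)
  case (1 a0 a1 a2 a3)
  assume "Re (fst (fst x)) = 0"
  then have h: "cnj a0 = - a0" using 1 by (simp add: complex_eq_iff)
  show ?thesis unfolding 1 omul_c ofC_c onorm_c using h by (simp add: algebra_simps)
qed

lemma anticomm: "Re (fst (fst x)) = 0 \<Longrightarrow> Re (fst (fst y)) = 0 \<Longrightarrow>
   omul x y + omul y x = ofC (of_real (-2 * inner x y))"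
  by (cases x rule: oct_cases; cases y rule: oct_cases) (simp add: omul_c ofC_c complex_eq_iff inner_complex_def algebra_simps)

lemma R3: "fst (fst x) = 0 \<or> Im t = 0 \<Longrightarrow> omul (ofC t) x = sm x (cnj t)"
  by (cases x rule: oct_cases) (auto simp: C complex_eq_iff)


lemma R1: assumes "Qc c e" "Qc c f" "hC c e f = 0" "FS c t" "FS c s"
  shows "omul (sm e t) (sm f s) = sm (omul e f) (cnj t * cnj s)"
proof (cases c)
  case RH
  obtain r where r: "t = of_real r" using assms(4) RH by (metis FS_RH_E)
  obtain r' where r': "s = of_real r'" using assms(5) RH by (metis FS_RH_E)
  show ?thesis unfolding r r' omul_real_left omul_real_right sm_sm by (simp add: mult.commute)
next
  case CO
  obtain a0 a1 a2 a3 where e: "e = ((a0,a1),(a2,a3))" by (rule oct_cases)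
  obtain b0 b1 b2 b3 where f: "f = ((b0,b1),(b2,b3))" by (rule oct_cases)
  have h0: "a0 = 0" "b0 = 0" using assms(1,2) CO e f by (simp_all add: Qc_def)
  have h1: "a1*cnj b1 + a2*cnj b2 + cnj a3 * b3 = 0" using assms(3) CO e f h0 by (simp add: hC_c)
  have h2: "cnj a1* b1 + cnj a2* b2 + a3 * cnj b3 = 0" using arg_cong[OF h1, of cnj] by simp
  show ?thesis unfolding e f using h0 h1 h2 apply (simp add: sm_c omul_c)
    apply (intro conjI)
    apply (simp_all add: algebra_simps)
    apply algebra
    done
qed

lemma R2: assumes "Qc c e" "FS c t" "FS c s"
  shows "omul (sm e t) (sm e s) = sm (omul e e) (cnj t * s)"
proof (cases c)
  case RH
  obtain r where r: "t = of_real r" using assms(2) RH by (metis FS_RH_E)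
  obtain r' where r': "s = of_real r'" using assms(3) RH by (metis FS_RH_E)
  show ?thesis unfolding r r' omul_real_left omul_real_right sm_sm by (simp add: mult.commute)
next
  case CO
  obtain a0 a1 a2 a3 where e: "e = ((a0,a1),(a2,a3))" by (rule oct_cases)
  have h0: "a0 = 0" using assms(1) CO e by (simp_all add: Qc_def)
  show ?thesis unfolding e using h0 by (simp add: sm_c omul_c algebra_simps)
qed

lemma Qc_mul: "Qc c a \<Longrightarrow> Qc c b \<Longrightarrow> hC c a b = 0 \<Longrightarrow> Qc c (omul a b)"
  by (cases a rule: oct_cases; cases b rule: oct_cases; cases c) (auto simp: Qc_def hC_c omul_c complex_eq_iff algebra_simps)

lemma hC_a_ab: "Qc c a \<Longrightarrow> Qc c b \<Longrightarrow> hC c a (omul a b) = 0"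
  by (cases a rule: oct_cases; cases b rule: oct_cases; cases c) (auto simp: Qc_def hC_c omul_c complex_eq_iff algebra_simps)

lemma hC_b_ab: "Qc c a \<Longrightarrow> Qc c b \<Longrightarrow> hC c b (omul a b) = 0"
  by (cases a rule: oct_cases; cases b rule: oct_cases; cases c) (auto simp: Qc_def hC_c omul_c complex_eq_iff algebra_simps)


abbreviation PP where "PP c \<equiv> Pu c (Aset c)"
abbreviation QQ where "QQ c \<equiv> Pu c UNIV"

lemma QQ_iff: "x \<in> QQ c \<longleftrightarrow> Qc c x" by (simp add: Pu_eq)
lemma PP_iff: "x \<in> PP c \<longleftrightarrow> x \<in> Aset c \<and> Qc c x" by (simp add: Pu_eq)

lemma Qc_0[simp]: "Qc c 0" by (cases c) (simp_all add: Qc_def)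
lemma Qc_add: "Qc c x \<Longrightarrow> Qc c y \<Longrightarrow> Qc c (x + y)" by (cases c) (simp_all add: Qc_def)
lemma Qc_minus: "Qc c x \<Longrightarrow> Qc c (- x)" by (cases c) (simp_all add: Qc_def)
lemma Qc_diff: "Qc c x \<Longrightarrow> Qc c y \<Longrightarrow> Qc c (x - y)" by (cases c) (simp_all add: Qc_def)
lemma Qc_sm: "Qc c x \<Longrightarrow> FS c t \<Longrightarrow> Qc c (sm x t)"
  by (cases x rule: oct_cases; cases c) (auto simp: Qc_def sm_c FS_def)
lemma Qc_pure: "Qc c x \<Longrightarrow> Re (fst (fst x)) = 0" by (cases c) (simp_all add: Qc_def)

lemma Aset_c: "((a0,a1),(a2,a3)) \<in> Aset c \<longleftrightarrow> c = CO \<or> (a2 = 0 \<and> a3 = 0)"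
  by (simp add: Aset_iff zero_prod_def)
lemma A_add: "x \<in> Aset c \<Longrightarrow> y \<in> Aset c \<Longrightarrow> x + y \<in> Aset c"
  by (cases x rule: oct_cases; cases y rule: oct_cases) (auto simp: Aset_c)
lemma A_minus: "x \<in> Aset c \<Longrightarrow> - x \<in> Aset c"
  by (cases x rule: oct_cases) (auto simp: Aset_c)
lemma A_diff: "x \<in> Aset c \<Longrightarrow> y \<in> Aset c \<Longrightarrow> x - y \<in> Aset c"
  by (cases x rule: oct_cases; cases y rule: oct_cases) (auto simp: Aset_c)
lemma A_sm: "x \<in> Aset c \<Longrightarrow> sm x t \<in> Aset c"
  by (cases x rule: oct_cases) (auto simp: Aset_c sm_c)
lemma A_ofC: "ofC t \<in> Aset c" by (simp add: Aset_c ofC_c)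
lemma A_0: "0 \<in> Aset c" by (simp add: Aset_c zero_c)
lemma A_mul: "x \<in> Aset c \<Longrightarrow> y \<in> Aset c \<Longrightarrow> omul x y \<in> Aset c"
  by (cases x rule: oct_cases; cases y rule: oct_cases) (auto simp: Aset_c omul_c)

lemma FS_0[simp]: "FS c 0" and FS_1[simp]: "FS c 1" and FS_ofreal[simp]: "FS c (of_real r)"
  by (simp_all add: FS_def)
lemma FS_add: "FS c a \<Longrightarrow> FS c b \<Longrightarrow> FS c (a + b)" by (auto simp: FS_def)
lemma FS_diff: "FS c a \<Longrightarrow> FS c b \<Longrightarrow> FS c (a - b)" by (auto simp: FS_def)
lemma FS_minus: "FS c a \<Longrightarrow> FS c (- a)" by (auto simp: FS_def)
lemma FS_mult: "FS c a \<Longrightarrow> FS c b \<Longrightarrow> FS c (a * b)" by (auto simp: FS_def)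
lemma FS_cnj: "FS c a \<Longrightarrow> FS c (cnj a)" by (auto simp: FS_def)
lemma FS_divide: "FS c a \<Longrightarrow> FS c b \<Longrightarrow> FS c (a / b)" by (auto simp: FS_def Im_divide)
lemma FS_cnj_eq: "c = RH \<Longrightarrow> FS c a \<Longrightarrow> cnj a = a" by (auto simp: FS_def complex_eq_iff)

lemma R3': "Qc c x \<Longrightarrow> FS c t \<Longrightarrow> omul (ofC t) x = sm x (cnj t)"
proof (rule R3)
  assume "Qc c x" "FS c t"
  then show "fst (fst x) = 0 \<or> Im t = 0" by (cases c) (auto simp: Qc_def FS_def)
qed

lemma ofC_sm1: "ofC t = sm (ofC 1) t" by (simp add: sm_ofC)

lemma hC_1_ofC: "FS c t \<Longrightarrow> hC c (ofC 1) (ofC t) = t"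
  by (cases c) (auto simp: hC_c ofC_c FS_def complex_eq_iff)
lemma hC_Q_ofC: "Qc c x \<Longrightarrow> FS c t \<Longrightarrow> hC c x (ofC t) = 0"
  by (cases x rule: oct_cases; cases c) (auto simp: hC_c ofC_c Qc_def FS_def)
lemma hC_ofC_Q: "Qc c x \<Longrightarrow> FS c t \<Longrightarrow> hC c (ofC t) x = 0"
  by (metis complex_cnj_zero hC_Q_ofC hC_sym)
lemma hC_1: "hC c (ofC 1) y = (case c of RH \<Rightarrow> of_real (Re (fst (fst y))) | CO \<Rightarrow> fst (fst y))"
  by (cases y rule: oct_cases; cases c) (auto simp: hC_c ofC_c)
lemma Q_decomp: "Qc c (x - ofC (hC c (ofC 1) x))"
  unfolding hC_1 by (cases x rule: oct_cases; cases c) (auto simp: hC_1 ofC_c Qc_def)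

definition comb :: "oct \<Rightarrow> oct \<Rightarrow> complex \<times> complex \<times> complex \<times> complex \<Rightarrow> oct" where
  "comb f1 f2 \<tau> = (case \<tau> of (t0,t1,t2,t3) \<Rightarrow> ofC t0 + sm f1 t1 + sm f2 t2 + sm (omul f1 f2) t3)"

lemma comb_add: "comb f1 f2 a + comb f1 f2 b = comb f1 f2 (a + b)"
  by (cases a; cases b) (simp add: comb_def ofC_add sm_add2 algebra_simps)

definition FS4 where "FS4 c \<tau> \<longleftrightarrow> (case \<tau> of (t0,t1,t2,t3) \<Rightarrow> FS c t0 \<and> FS c t1 \<and> FS c t2 \<and> FS c t3)"

definition mu :: "complex \<Rightarrow> complex \<Rightarrow> complex \<times> complex \<times> complex \<times> complex \<Rightarrow> complex \<times> complex \<times> complex \<times> complex \<Rightarrow> complex \<times> complex \<times> complex \<times> complex" where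
 "mu n1 n2 \<tau> \<sigma> = (case \<tau> of (t0,t1,t2,t3) \<Rightarrow> case \<sigma> of (s0,s1,s2,s3) \<Rightarrow>
   (t0* s0 - n1*cnj t1* s1 - n2*cnj t2* s2 - n1*n2*cnj t3* s3,
    cnj t0* s1 + t1* s0 + n2*(cnj t2*cnj s3 - cnj t3*cnj s2),
    cnj t0* s2 + t2* s0 + n1*(cnj t3*cnj s1 - cnj t1*cnj s3),
    cnj t0* s3 + t3* s0 + cnj t1*cnj s2 - cnj t2*cnj s1))"

lemma norm_omul: "norm (omul x y) = norm x * norm y"
  using norm_mult_sq[of x y] by (simp add: power_mult_distrib[symmetric] power2_eq_iff_nonneg)


lemma frame_basic:
  assumes Q1: "Qc c f1" and Q2: "Qc c f2" and o: "hC c f1 f2 = 0"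
  shows "Qc c (omul f1 f2)" "hC c f2 f1 = 0" "hC c f1 (omul f1 f2) = 0" "hC c (omul f1 f2) f1 = 0"
    "hC c f2 (omul f1 f2) = 0" "hC c (omul f1 f2) f2 = 0" "norm (omul f1 f2) = norm f1 * norm f2"
  using Qc_mul[OF Q1 Q2 o] hC_sym[of c f2 f1] o hC_a_ab[OF Q1 Q2] hC_b_ab[OF Q1 Q2]
    hC_sym[of c "omul f1 f2" f1] hC_sym[of c "omul f1 f2" f2] norm_omul by auto

lemma frame_table:
  assumes Q1: "Qc c f1" and Q2: "Qc c f2" and o: "hC c f1 f2 = 0"
  defines "f3 \<equiv> omul f1 f2" and "n1 \<equiv> complex_of_real (norm f1 ^2)" and "n2 \<equiv> complex_of_real (norm f2 ^2)"
  shows "omul f1 f1 = ofC (- n1)" "omul f2 f2 = ofC (- n2)" "omul f3 f3 = ofC (- (n1 * n2))"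
    "omul f2 f1 = - f3" "omul f1 f3 = sm f2 (- n1)" "omul f3 f1 = sm f2 n1"
    "omul f2 f3 = sm f1 n2" "omul f3 f2 = sm f1 (- n2)"
proof -
  note fb = frame_basic[OF Q1 Q2 o, folded f3_def]
  have p1: "Re (fst (fst f1)) = 0" and p2: "Re (fst (fst f2)) = 0" and p3: "Re (fst (fst f3)) = 0"
    using Q1 Q2 fb(1) by (simp_all add: Qc_pure)
  show T11: "omul f1 f1 = ofC (- n1)" using sq_pure[OF p1] n1_def by simp
  show T22: "omul f2 f2 = ofC (- n2)" using sq_pure[OF p2] n2_def by simp
  show "omul f3 f3 = ofC (- (n1 * n2))" using sq_pure[OF p3] n1_def n2_def fb(7)
    by (simp add: power_mult_distrib)
  have inn: "inner f1 f2 = 0" using o Re_hC[of c f1 f2] by simp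
  show T21: "omul f2 f1 = - f3" using anticomm[OF p1 p2] inn f3_def
    by (simp add: eq_neg_iff_add_eq_0 add.commute)
  have rn1: "Im (- n1) = 0" "Im n1 = 0" "Im (- n2) = 0" using n1_def n2_def by simp_all
  have s1: "omul (ofC (- n1)) f2 = sm f2 (- n1)"
    using R3[of f2 "- n1"] rn1 n1_def by simp
  have s2: "omul (ofC (- n2)) f1 = sm f1 (- n2)"
    using R3[of f1 "- n2"] rn1 n2_def by simp
  show "omul f1 f3 = sm f2 (- n1)" unfolding f3_def alt_left T11 s1 ..
  show "omul f3 f1 = sm f2 n1"
  proof -
    have "omul f3 f1 = - omul (omul f2 f1) f1" using T21 by (simp add: omul_minus_left)
    also have "\<dots> = - omul f2 (omul f1 f1)" by (simp add: alt_right)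
    also have "\<dots> = - sm f2 (- n1)" unfolding T11 sm_def ..
    finally show ?thesis by (simp add: sm_minus2)
  qed
  show "omul f2 f3 = sm f1 n2"
  proof -
    have "omul f2 f3 = omul f2 (- omul f2 f1)" using T21 by simp
    also have "\<dots> = - omul (omul f2 f2) f1" by (simp add: omul_minus_right alt_left)
    also have "\<dots> = - sm f1 (- n2)" unfolding T22 s2 ..
    finally show ?thesis by (simp add: sm_minus2)
  qed
  show "omul f3 f2 = sm f1 (- n2)" unfolding f3_def alt_right T22 sm_def ..
qed


lemma frame_mul:
  assumes Q1: "Qc c f1" and Q2: "Qc c f2" and o: "hC c f1 f2 = 0"
    and Ft: "FS4 c (t0,t1,t2,t3)" and Fs: "FS4 c (s0,s1,s2,s3)"
  shows "omul (comb f1 f2 (t0,t1,t2,t3)) (comb f1 f2 (s0,s1,s2,s3)) =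
     comb f1 f2 (mu (complex_of_real (norm f1 ^2)) (complex_of_real (norm f2 ^2)) (t0,t1,t2,t3) (s0,s1,s2,s3))"
proof -
  define f3 where "f3 = omul f1 f2"
  define n1 where "n1 = complex_of_real (norm f1 ^2)"
  define n2 where "n2 = complex_of_real (norm f2 ^2)"
  note fb = frame_basic[OF Q1 Q2 o, folded f3_def]
  note tb = frame_table[OF Q1 Q2 o, folded f3_def n1_def n2_def]
  have Q3: "Qc c f3" using fb(1) .
  have ft: "FS c t0" "FS c t1" "FS c t2" "FS c t3" using Ft by (simp_all add: FS4_def)
  have fs: "FS c s0" "FS c s1" "FS c s2" "FS c s3" using Fs by (simp_all add: FS4_def)
  have TB: "\<And>f a b. Qc c f \<Longrightarrow> FS c a \<Longrightarrow> FS c b \<Longrightarrow> omul (ofC a) (sm f b) = sm f (cnj a * b)"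
    by (metis R3' Qc_sm sm_sm mult.commute)
  have TC: "\<And>f a b. omul (sm f a) (ofC b) = sm f (a * b)"
    by (simp add: sm_def[symmetric] sm_sm)
  have sm_ofC': "\<And>a b. sm (ofC a) b = ofC (a * b)" by (simp add: sm_ofC)
  have e00: "omul (ofC t0) (ofC s0) = ofC (t0 * s0)" by (simp add: omul_ofC_ofC)
  have e01: "omul (ofC t0) (sm f1 s1) = sm f1 (cnj t0 * s1)" using TB Q1 ft fs by blast
  have e02: "omul (ofC t0) (sm f2 s2) = sm f2 (cnj t0 * s2)" using TB Q2 ft fs by blast
  have e03: "omul (ofC t0) (sm f3 s3) = sm f3 (cnj t0 * s3)" using TB Q3 ft fs by blast
  have e10: "omul (sm f1 t1) (ofC s0) = sm f1 (t1 * s0)" by (rule TC)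
  have e20: "omul (sm f2 t2) (ofC s0) = sm f2 (t2 * s0)" by (rule TC)
  have e30: "omul (sm f3 t3) (ofC s0) = sm f3 (t3 * s0)" by (rule TC)
  have e11: "omul (sm f1 t1) (sm f1 s1) = ofC (- n1 * (cnj t1 * s1))"
    using R2[OF Q1 ft(2) fs(2)] tb(1) sm_ofC' by simp
  have e22: "omul (sm f2 t2) (sm f2 s2) = ofC (- n2 * (cnj t2 * s2))"
    using R2[OF Q2 ft(3) fs(3)] tb(2) sm_ofC' by simp
  have e33: "omul (sm f3 t3) (sm f3 s3) = ofC (- (n1 * n2) * (cnj t3 * s3))"
    using R2[OF Q3 ft(4) fs(4)] tb(3) sm_ofC' by simp
  have e12: "omul (sm f1 t1) (sm f2 s2) = sm f3 (cnj t1 * cnj s2)"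
    using R1[OF Q1 Q2 o ft(2) fs(3)] f3_def by simp
  have e21: "omul (sm f2 t2) (sm f1 s1) = sm f3 (- (cnj t2 * cnj s1))"
    using R1[OF Q2 Q1 fb(2) ft(3) fs(2)] tb(4) by (simp add: sm_minus sm_minus2)
  have e13: "omul (sm f1 t1) (sm f3 s3) = sm f2 (- n1 * (cnj t1 * cnj s3))"
    using R1[OF Q1 Q3 fb(3) ft(2) fs(4)] tb(5) by (simp add: sm_sm)
  have e31: "omul (sm f3 t3) (sm f1 s1) = sm f2 (n1 * (cnj t3 * cnj s1))"
    using R1[OF Q3 Q1 fb(4) ft(4) fs(2)] tb(6) by (simp add: sm_sm)
  have e23: "omul (sm f2 t2) (sm f3 s3) = sm f1 (n2 * (cnj t2 * cnj s3))"
    using R1[OF Q2 Q3 fb(5) ft(3) fs(4)] tb(7) by (simp add: sm_sm)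
  have e32: "omul (sm f3 t3) (sm f2 s2) = sm f1 (- n2 * (cnj t3 * cnj s2))"
    using R1[OF Q3 Q2 fb(6) ft(4) fs(3)] tb(8) by (simp add: sm_sm)
  have c0: "\<And>a. ofC a = comb f1 f2 (a,0,0,0)" by (simp add: comb_def)
  have c1: "\<And>a. sm f1 a = comb f1 f2 (0,a,0,0)" by (simp add: comb_def)
  have c2: "\<And>a. sm f2 a = comb f1 f2 (0,0,a,0)" by (simp add: comb_def)
  have c3: "\<And>a. sm f3 a = comb f1 f2 (0,0,0,a)" by (simp add: comb_def f3_def)
  have "omul (comb f1 f2 (t0,t1,t2,t3)) (comb f1 f2 (s0,s1,s2,s3)) =
    omul (ofC t0 + sm f1 t1 + sm f2 t2 + sm f3 t3) (ofC s0 + sm f1 s1 + sm f2 s2 + sm f3 s3)"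
    by (simp add: comb_def f3_def)
  also have "\<dots> = comb f1 f2 (mu n1 n2 (t0,t1,t2,t3) (s0,s1,s2,s3))"
    unfolding omul_add_left omul_add_right e00 e01 e02 e03 e10 e20 e30 e11 e22 e33 e12 e21 e13 e31 e23 e32
    unfolding c0 c1 c2 c3 comb_add
    by (rule arg_cong[where f="comb f1 f2"]) (simp add: mu_def algebra_simps)
  finally show ?thesis unfolding n1_def n2_def .
qed


lemma GZ:
  fixes B0 S :: "oct set"
  assumes "finite B0" "independent B0" "V = span B0" "S \<subseteq> V" "pairwise orthogonal S" "0 \<notin> S"
    "card S = card B0" "finite S" "y \<in> V" "\<forall>s\<in>S. inner s y = 0"
  shows "y = 0"
proof -
  have iS: "independent S" using assms(5,6) pairwise_orthogonal_independent by blast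
  have "dim V = card B0" using assms(2,3) dim_span_eq_card_independent by blast
  then have "V \<subseteq> span S" using card_eq_dim[of S V] iS assms(4,7,8) by simp
  then have "y \<in> span S" using assms(9) by blast
  then have "orthogonal y y" using orthogonal_to_span[of y S y] assms(10)
    by (simp add: orthogonal_def inner_commute)
  then show ?thesis by (simp add: orthogonal_def)
qed

lemma card_orth:
  fixes f :: "nat \<Rightarrow> 'a::real_inner"
  assumes "\<And>i j. i < n \<Longrightarrow> j < n \<Longrightarrow> i \<noteq> j \<Longrightarrow> inner (f i) (f j) = 0" "\<And>i. i < n \<Longrightarrow> f i \<noteq> 0"
  shows "card (f ` {..<n}) = n" "pairwise orthogonal (f ` {..<n})" "0 \<notin> f ` {..<n}" "finite (f ` {..<n})"
proof -
  have "inj_on f {..<n}"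
  proof (rule inj_onI)
    fix i j assume "i \<in> {..<n}" "j \<in> {..<n}" "f i = f j"
    then show "i = j" using assms by (metis inner_eq_zero_iff lessThan_iff)
  qed
  then show "card (f ` {..<n}) = n" by (simp add: card_image)
  show "pairwise orthogonal (f ` {..<n})"
    unfolding pairwise_def orthogonal_def using assms(1) by auto
  show "0 \<notin> f ` {..<n}" using assms(2) by auto
qed auto

lemma inner_hC: "inner x y = Re (hC c x y)" by (simp add: Re_hC)

lemma subspace_PP: "subspace (PP c)"
  unfolding subspace_def
proof (intro conjI ballI allI)
  show "0 \<in> PP c" by (simp add: PP_iff A_0)
  fix x y assume "x \<in> PP c" "y \<in> PP c"
  then show "x + y \<in> PP c" by (simp add: PP_iff A_add Qc_add)
next
  fix r x assume "x \<in> PP c"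
  then show "r *\<^sub>R x \<in> PP c" by (simp add: PP_iff scaleR_sm A_sm Qc_sm)
qed


definition B0 :: "FA \<Rightarrow> oct set" where
  "B0 c = (case c of RH \<Rightarrow> {((\<i>,0),(0,0)), ((0,1),(0,0)), ((0,\<i>),(0,0))}
     | CO \<Rightarrow> {((0,1),(0,0)), ((0,\<i>),(0,0)), ((0,0),(1,0)), ((0,0),(\<i>,0)), ((0,0),(0,1)), ((0,0),(0,\<i>))})"

lemma B0_props: "finite (B0 c)" "independent (B0 c)" "card (B0 c) = (case c of RH \<Rightarrow> 3 | CO \<Rightarrow> 6)"
    "B0 c \<subseteq> PP c"
proof -
  show "finite (B0 c)" by (cases c) (simp_all add: B0_def)
  have "pairwise orthogonal (B0 c)"
    by (cases c) (auto simp: B0_def pairwise_def orthogonal_def inner_complex_def)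
  moreover have "0 \<notin> B0 c" by (cases c) (auto simp: B0_def zero_prod_def)
  ultimately show "independent (B0 c)" using pairwise_orthogonal_independent by blast
  show "card (B0 c) = (case c of RH \<Rightarrow> 3 | CO \<Rightarrow> 6)" by (cases c) (simp_all add: B0_def)
  show "B0 c \<subseteq> PP c" by (cases c) (auto simp: B0_def PP_iff Aset_c Qc_def)
qed

lemma PP_span: "PP c = span (B0 c)"
proof
  show "span (B0 c) \<subseteq> PP c" using B0_props(4) subspace_PP span_minimal by blast
  show "PP c \<subseteq> span (B0 c)"
  proof
    fix x assume x: "x \<in> PP c"
    obtain a0 a1 a2 a3 where xe: "x = ((a0,a1),(a2,a3))" by (rule oct_cases)
    show "x \<in> span (B0 c)"
    proof (cases c)
      case RH
      have "a2 = 0" "a3 = 0" "Re a0 = 0" using x xe RH by (auto simp: PP_iff Aset_c Qc_def)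
      then have e: "x = Im a0 *\<^sub>R ((\<i>,0),(0,0)) + Re a1 *\<^sub>R ((0,1),(0,0)) + Im a1 *\<^sub>R ((0,\<i>),(0,0))"
        using xe by (simp add: complex_eq_iff)
      have "Im a0 *\<^sub>R ((\<i>,0),(0,0)) + Re a1 *\<^sub>R ((0,1),(0,0)) + Im a1 *\<^sub>R ((0,\<i>),(0,0)) \<in> span (B0 RH)"
        unfolding B0_def FA.case by (intro span_add span_scale span_base) auto
      then show ?thesis by (simp only: e RH)
    next
      case CO
      have "a0 = 0" using x xe CO by (auto simp: PP_iff Aset_c Qc_def)
      then have e: "x = Re a1 *\<^sub>R ((0,1),(0,0)) + Im a1 *\<^sub>R ((0,\<i>),(0,0)) + Re a2 *\<^sub>R ((0,0),(1,0))
         + Im a2 *\<^sub>R ((0,0),(\<i>,0)) + Re a3 *\<^sub>R ((0,0),(0,1)) + Im a3 *\<^sub>R ((0,0),(0,\<i>))"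
        using xe by (simp add: complex_eq_iff)
      have "Re a1 *\<^sub>R ((0,1),(0,0)) + Im a1 *\<^sub>R ((0,\<i>),(0,0)) + Re a2 *\<^sub>R ((0,0),(1,0))
         + Im a2 *\<^sub>R ((0,0),(\<i>,0)) + Re a3 *\<^sub>R ((0,0),(0,1)) + Im a3 *\<^sub>R ((0,0),(0,\<i>)) \<in> span (B0 CO)"
        unfolding B0_def FA.case by (intro span_add span_scale span_base) auto
      then show ?thesis by (simp only: e CO)
    qed
  qed
qed


lemma less3_cases: "i < (3::nat) \<longleftrightarrow> i = 0 \<or> i = 1 \<or> i = 2" by auto
lemma less6_cases: "i < (6::nat) \<longleftrightarrow> i = 0 \<or> i = 1 \<or> i = 2 \<or> i = 3 \<or> i = 4 \<or> i = 5" by auto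

lemma Zlem:
  assumes P: "e1 \<in> PP c" "e2 \<in> PP c" "e3 \<in> PP c" and nz: "e1 \<noteq> 0" "e2 \<noteq> 0" "e3 \<noteq> 0"
    and o: "hC c e1 e2 = 0" "hC c e1 e3 = 0" "hC c e2 e3 = 0"
    and y: "y \<in> PP c" and oy: "hC c e1 y = 0" "hC c e2 y = 0" "hC c e3 y = 0"
  shows "y = 0"
proof -
  have o': "hC c e2 e1 = 0" "hC c e3 e1 = 0" "hC c e3 e2 = 0" using o hC_sym by (metis complex_cnj_zero)+
  show ?thesis
  proof (cases c)
    case RH
    define f where "f = (\<lambda>i. [e1,e2,e3] ! i)"
    have orth: "\<And>i j. i < 3 \<Longrightarrow> j < 3 \<Longrightarrow> i \<noteq> j \<Longrightarrow> inner (f i) (f j) = 0"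
      by (auto simp: f_def less3_cases inner_hC[of _ _ c] o o' nz)
    have nzf: "\<And>i. i < 3 \<Longrightarrow> f i \<noteq> 0" by (auto simp: f_def less3_cases nz)
    note co = card_orth[of 3 f, OF orth nzf]
    show ?thesis
    proof (rule GZ[of "B0 c" "PP c" "f ` {..<3}" y])
      show "f ` {..<3} \<subseteq> PP c" using P by (auto simp: f_def less3_cases)
      show "card (f ` {..<3}) = card (B0 c)" using co(1) B0_props(3) RH by simp
      show "\<forall>s\<in>f ` {..<3}. inner s y = 0" by (auto simp: f_def less3_cases inner_hC[of _ _ c] oy)
    qed (simp_all add: B0_props PP_span co y[unfolded PP_span])
  next
    case CO
    define f where "f = (\<lambda>i. [e1, sm e1 \<i>, e2, sm e2 \<i>, e3, sm e3 \<i>] ! i)"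
    have fi: "FS c \<i>" using CO by (simp add: FS_def)
    have nz': "sm e \<i> \<noteq> 0" if "e \<noteq> 0" for e using that by (metis norm_sm norm_zero mult_eq_0_iff complex_i_not_zero norm_eq_zero)
    have orth: "\<And>i j. i < 6 \<Longrightarrow> j < 6 \<Longrightarrow> i \<noteq> j \<Longrightarrow> inner (f i) (f j) = 0"
      by (auto simp: f_def less6_cases inner_hC[of _ _ c] o o' nz nz' hC_sm_left hC_sm_right fi hC_self)
    have nzf: "\<And>i. i < 6 \<Longrightarrow> f i \<noteq> 0" by (auto simp: f_def less6_cases nz nz')
    note co = card_orth[of 6 f, OF orth nzf]
    show ?thesis
    proof (rule GZ[of "B0 c" "PP c" "f ` {..<6}" y])
      show "f ` {..<6} \<subseteq> PP c" using P fi by (auto simp: f_def less6_cases PP_iff A_sm Qc_sm)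
      show "card (f ` {..<6}) = card (B0 c)" using co(1) B0_props(3) CO by simp
      show "\<forall>s\<in>f ` {..<6}. inner s y = 0" by (auto simp: f_def less6_cases inner_hC[of _ _ c] oy hC_sm_left fi)
    qed (simp_all add: B0_props PP_span co y[unfolded PP_span])
  qed
qed


lemma comb_coefs:
  assumes Q1: "Qc c f1" and Q2: "Qc c f2" and o: "hC c f1 f2 = 0" and F: "FS4 c (t0,t1,t2,t3)"
  shows "hC c (ofC 1) (comb f1 f2 (t0,t1,t2,t3)) = t0"
    "hC c f1 (comb f1 f2 (t0,t1,t2,t3)) = complex_of_real (norm f1^2) * t1"
    "hC c f2 (comb f1 f2 (t0,t1,t2,t3)) = complex_of_real (norm f2^2) * t2"
    "hC c (omul f1 f2) (comb f1 f2 (t0,t1,t2,t3)) = complex_of_real (norm f1^2) * complex_of_real (norm f2^2) * t3"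
proof -
  note fb = frame_basic[OF Q1 Q2 o]
  have ft: "FS c t0" "FS c t1" "FS c t2" "FS c t3" using F by (simp_all add: FS4_def)
  have z1: "hC c (ofC 1) f = 0" if "Qc c f" for f using hC_ofC_Q[OF that, of 1] by simp
  have z2: "hC c f (ofC t0) = 0" if "Qc c f" for f using hC_Q_ofC[OF that ft(1)] .
  have o': "hC c f2 f1 = 0" using fb(2) .
  show "hC c (ofC 1) (comb f1 f2 (t0,t1,t2,t3)) = t0"
    by (simp add: comb_def hC_add_right hC_sm_right ft hC_1_ofC z1 Q1 Q2 fb(1))
  show "hC c f1 (comb f1 f2 (t0,t1,t2,t3)) = complex_of_real (norm f1^2) * t1"
    by (simp add: comb_def hC_add_right hC_sm_right ft z2 Q1 o fb(3) hC_self)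
  show "hC c f2 (comb f1 f2 (t0,t1,t2,t3)) = complex_of_real (norm f2^2) * t2"
    by (simp add: comb_def hC_add_right hC_sm_right ft z2 Q2 o' fb(5) hC_self)
  show "hC c (omul f1 f2) (comb f1 f2 (t0,t1,t2,t3)) = complex_of_real (norm f1^2) * complex_of_real (norm f2^2) * t3"
    by (simp add: comb_def hC_add_right hC_sm_right ft z2 fb(1,4,6,7) hC_self power_mult_distrib)
qed

lemma hC_comb_left:
  assumes F: "FS4 c (t0,t1,t2,t3)"
  shows "hC c (comb f1 f2 (t0,t1,t2,t3)) y = cnj t0 * hC c (ofC 1) y + cnj t1 * hC c f1 y + cnj t2 * hC c f2 y + cnj t3 * hC c (omul f1 f2) y"
proof -
  have ft: "FS c t0" "FS c t1" "FS c t2" "FS c t3" using F by (simp_all add: FS4_def)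
  show ?thesis
    by (simp add: comb_def hC_add_left hC_sm_left ft ofC_sm1[of t0])
qed

lemma comb_gram:
  assumes Q1: "Qc c f1" and Q2: "Qc c f2" and o: "hC c f1 f2 = 0" and F: "FS4 c (t0,t1,t2,t3)" and G: "FS4 c (s0,s1,s2,s3)"
  shows "hC c (comb f1 f2 (t0,t1,t2,t3)) (comb f1 f2 (s0,s1,s2,s3)) =
     cnj t0 * s0 + cnj t1 * (complex_of_real (norm f1^2) * s1) + cnj t2 * (complex_of_real (norm f2^2) * s2)
      + cnj t3 * (complex_of_real (norm f1^2) * complex_of_real (norm f2^2) * s3)"
  unfolding hC_comb_left[OF F] comb_coefs[OF Q1 Q2 o G] ..

lemma comb_sm: "sm (comb f1 f2 (t0,t1,t2,t3)) z = comb f1 f2 (t0*z,t1*z,t2*z,t3*z)"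
  by (simp add: comb_def sm_add sm_ofC sm_sm)

lemma comb_A: "f1 \<in> Aset c \<Longrightarrow> f2 \<in> Aset c \<Longrightarrow> comb f1 f2 \<tau> \<in> Aset c"
  by (cases \<tau>) (auto simp: comb_def A_add A_ofC A_sm A_mul)

lemma FS4_mu: "FS4 c \<tau> \<Longrightarrow> FS4 c \<sigma> \<Longrightarrow> FS c n1 \<Longrightarrow> FS c n2 \<Longrightarrow> FS4 c (mu n1 n2 \<tau> \<sigma>)"
  by (cases \<tau>; cases \<sigma>) (auto simp: FS4_def mu_def intro!: FS_add FS_mult FS_cnj FS_diff FS_minus)


definition coef :: "FA \<Rightarrow> oct \<Rightarrow> oct \<Rightarrow> oct \<Rightarrow> complex \<times> complex \<times> complex \<times> complex" where
  "coef c a b y = (hC c (ofC 1) y, hC c a y / complex_of_real (norm a^2), hC c b y / complex_of_real (norm b^2),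
      hC c (omul a b) y / (complex_of_real (norm a^2) * complex_of_real (norm b^2)))"

lemma FS4_coef: "FS4 c (coef c a b y)"
  by (simp add: FS4_def coef_def FS_hC FS_divide FS_mult del: of_real_power)

lemma coef_comb:
  assumes "Qc c a" "Qc c b" "hC c a b = 0" "a \<noteq> 0" "b \<noteq> 0" "FS4 c \<tau>"
  shows "coef c a b (comb a b \<tau>) = \<tau>"
proof (cases \<tau>)
  case (fields t0 t1 t2 t3)
  show ?thesis using comb_coefs[OF assms(1,2,3), of t0 t1 t2 t3] assms(4,5,6) fields
    by (simp add: coef_def)
qed

lemma decomp:
  assumes a: "a \<in> PP c" and b: "b \<in> PP c" and nz: "a \<noteq> 0" "b \<noteq> 0" and o: "hC c a b = 0" and y: "y \<in> Aset c"
  shows "comb a b (coef c a b y) = y"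
proof -
  have Qa: "Qc c a" and Qb: "Qc c b" using a b by (simp_all add: PP_iff)
  note fb = frame_basic[OF Qa Qb o]
  obtain t0 t1 t2 t3 where tt: "coef c a b y = (t0,t1,t2,t3)" by (cases "coef c a b y") auto
  have F: "FS4 c (t0,t1,t2,t3)" using FS4_coef tt by metis
  have tdef: "t0 = hC c (ofC 1) y" "t1 = hC c a y / complex_of_real (norm a^2)" "t2 = hC c b y / complex_of_real (norm b^2)"
      "t3 = hC c (omul a b) y / (complex_of_real (norm a^2) * complex_of_real (norm b^2))"
    using tt by (simp_all add: coef_def)
  note cc = comb_coefs[OF Qa Qb o F]
  define z where "z = y - comb a b (t0,t1,t2,t3)"
  have zA: "z \<in> Aset c" unfolding z_def using y a b by (simp add: A_diff comb_A PP_iff)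
  have z0: "hC c (ofC 1) z = 0" unfolding z_def hC_diff_right cc using tdef by simp
  have zQ: "Qc c z" using Q_decomp[of c z] z0 by simp
  have zP: "z \<in> PP c" using zA zQ by (simp add: PP_iff)
  have za: "hC c a z = 0" unfolding z_def hC_diff_right cc using tdef nz by simp
  have zb: "hC c b z = 0" unfolding z_def hC_diff_right cc using tdef nz by simp
  have zab: "hC c (omul a b) z = 0" unfolding z_def hC_diff_right cc using tdef nz by simp
  have abP: "omul a b \<in> PP c" using a b fb(1) by (simp add: PP_iff A_mul)
  have abnz: "omul a b \<noteq> 0" using fb(7) nz by (metis mult_eq_0_iff norm_eq_zero)
  have "z = 0" by (rule Zlem[OF a b abP nz abnz o fb(3) fb(5) zP za zb zab])
  then show ?thesis using tt z_def by simp
qed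






lemma Fsc_mem: "ofC t \<in> Fsc c \<longleftrightarrow> FS c t"
  by (simp add: Fsc_eq image_iff)

lemma omul_diff_right: "omul z (x - y) = omul z x - omul z y"
  by (metis diff_conv_add_uminus omul_add_right omul_minus_right)

lemma sharp_add: "sharp c \<phi> \<Longrightarrow> x \<in> Aset c \<Longrightarrow> y \<in> Aset c \<Longrightarrow> \<phi> (x + y) = \<phi> x + \<phi> y"
  by (simp add: sharp_def)
lemma sharp_sm: "sharp c \<phi> \<Longrightarrow> x \<in> Aset c \<Longrightarrow> FS c t \<Longrightarrow> \<phi> (sm x t) = sm (\<phi> x) t"
proof -
  assume a: "sharp c \<phi>" "x \<in> Aset c" "FS c t"
  have "ofC t \<in> Fsc c" using a(3) by (simp add: Fsc_mem)
  then show ?thesis using a(1,2) unfolding sharp_def sm_def by blast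
qed
lemma sharp_mul: "sharp c \<phi> \<Longrightarrow> x \<in> Aset c \<Longrightarrow> y \<in> Aset c \<Longrightarrow> \<phi> (omul x y) = omul (\<phi> x) (\<phi> y)"
  by (simp add: sharp_def)
lemma sharp_hC: "sharp c \<phi> \<Longrightarrow> x \<in> Aset c \<Longrightarrow> y \<in> Aset c \<Longrightarrow> hC c (\<phi> x) (\<phi> y) = hC c x y"
  by (simp add: sharp_def ip_eq)
lemma sharp_out: "sharp c \<phi> \<Longrightarrow> x \<notin> Aset c \<Longrightarrow> \<phi> x = 0"
  unfolding sharp_def by blast

lemma sharp_norm: "sharp c \<phi> \<Longrightarrow> x \<in> Aset c \<Longrightarrow> norm (\<phi> x) = norm x"
proof -
  assume a: "sharp c \<phi>" "x \<in> Aset c"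
  have "hC c (\<phi> x) (\<phi> x) = hC c x x" using sharp_hC[OF a a(2)] .
  then have "complex_of_real (norm (\<phi> x)^2) = complex_of_real (norm x^2)" by (simp only: hC_self)
  then have "norm (\<phi> x)^2 = norm x^2" by (simp only: of_real_eq_iff)
  then show ?thesis by (simp add: power2_eq_iff_nonneg)
qed

lemma sharp_one: assumes "sharp c \<phi>" shows "\<phi> (ofC 1) = ofC 1"
proof -
  define u where "u = \<phi> (ofC 1)"
  have uu: "omul u u = u" using sharp_mul[OF assms A_ofC A_ofC, of 1 1] u_def by simp
  have nu: "norm u = 1" using sharp_norm[OF assms A_ofC, of 1] u_def by (simp add: ofC_c norm_Pair)
  have "omul u (u - ofC 1) = 0" by (simp add: omul_diff_right uu)
  then have "norm u * norm (u - ofC 1) = 0" by (metis norm_omul norm_zero)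
  then have "u - ofC 1 = 0" using nu by simp
  then show ?thesis using u_def by simp
qed

lemma sharp_ofC: "sharp c \<phi> \<Longrightarrow> FS c t \<Longrightarrow> \<phi> (ofC t) = ofC t"
  by (metis A_ofC ofC_sm1 sharp_one sharp_sm)

lemma sharp_Q: assumes "sharp c \<phi>" "x \<in> PP c" shows "Qc c (\<phi> x)"
proof -
  have xA: "x \<in> Aset c" and xQ: "Qc c x" using assms(2) by (simp_all add: PP_iff)
  have "hC c (ofC 1) (\<phi> x) = hC c (\<phi> (ofC 1)) (\<phi> x)" using sharp_one[OF assms(1)] by simp
  also have "\<dots> = hC c (ofC 1) x" using sharp_hC[OF assms(1) A_ofC xA] .
  also have "\<dots> = 0" using hC_ofC_Q[OF xQ, of 1] by simp
  finally show ?thesis using Q_decomp[of c "\<phi> x"] by simp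
qed

lemma sharp_comb:
  assumes "sharp c \<phi>" "a \<in> Aset c" "b \<in> Aset c" "FS4 c \<tau>"
  shows "\<phi> (comb a b \<tau>) = comb (\<phi> a) (\<phi> b) \<tau>"
proof (cases \<tau>)
  case (fields t0 t1 t2 t3)
  have ft: "FS c t0" "FS c t1" "FS c t2" "FS c t3" using assms(4) fields by (simp_all add: FS4_def)
  have abA: "omul a b \<in> Aset c" using assms(2,3) A_mul by blast
  have m: "ofC t0 \<in> Aset c" "sm a t1 \<in> Aset c" "sm b t2 \<in> Aset c" "sm (omul a b) t3 \<in> Aset c"
    using assms(2,3) abA by (simp_all add: A_ofC A_sm)
  have "\<phi> (ofC t0 + sm a t1 + sm b t2 + sm (omul a b) t3) = \<phi> (ofC t0) + \<phi> (sm a t1) + \<phi> (sm b t2) + \<phi> (sm (omul a b) t3)"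
    using m sharp_add[OF assms(1)] A_add by metis
  also have "\<dots> = ofC t0 + sm (\<phi> a) t1 + sm (\<phi> b) t2 + sm (omul (\<phi> a) (\<phi> b)) t3"
    using sharp_ofC[OF assms(1) ft(1)] sharp_sm[OF assms(1) assms(2) ft(2)] sharp_sm[OF assms(1) assms(3) ft(3)]
      sharp_sm[OF assms(1) abA ft(4)] sharp_mul[OF assms(1) assms(2,3)] by simp
  finally show ?thesis unfolding fields comb_def by simp
qed

lemma sharp_uniq:
  assumes "sharp c \<phi>" "sharp c \<psi>" "a \<in> PP c" "b \<in> PP c" "a \<noteq> 0" "b \<noteq> 0" "hC c a b = 0"
    "\<phi> a = \<psi> a" "\<phi> b = \<psi> b"
  shows "\<phi> = \<psi>"
proof
  fix y
  show "\<phi> y = \<psi> y"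
  proof (cases "y \<in> Aset c")
    case True
    have aA: "a \<in> Aset c" "b \<in> Aset c" using assms(3,4) by (simp_all add: PP_iff)
    have "\<phi> y = \<phi> (comb a b (coef c a b y))" using decomp[OF assms(3-7) True] by simp
    also have "\<dots> = comb (\<phi> a) (\<phi> b) (coef c a b y)" by (rule sharp_comb[OF assms(1) aA FS4_coef])
    also have "\<dots> = comb (\<psi> a) (\<psi> b) (coef c a b y)" using assms(8,9) by simp
    also have "\<dots> = \<psi> (comb a b (coef c a b y))" by (rule sharp_comb[OF assms(2) aA FS4_coef, symmetric])
    also have "\<dots> = \<psi> y" using decomp[OF assms(3-7) True] by simp
    finally show ?thesis .
  next
    case False
    then show ?thesis using sharp_out assms(1,2) by metis
  qed
qed


lemma coef_add: "coef c a b (x + y) = coef c a b x + coef c a b y"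
  by (simp add: coef_def hC_add_right add_divide_distrib)

lemma coef_sm: "FS c t \<Longrightarrow> coef c a b (sm x t) = (case coef c a b x of (t0,t1,t2,t3) \<Rightarrow> (t0*t,t1*t,t2*t,t3*t))"
  by (simp add: coef_def hC_sm_right)

lemma sharp_exists:
  assumes a: "a \<in> PP c" and b: "b \<in> PP c" and nz: "a \<noteq> 0" "b \<noteq> 0" and o: "hC c a b = 0"
    and Qu: "Qc c u" and Qw: "Qc c w" and ou: "hC c u w = 0" and nu: "norm u = norm a" and nw: "norm w = norm b"
  shows "\<exists>\<phi>. sharp c \<phi> \<and> \<phi> a = u \<and> \<phi> b = w"
proof -
  have Qa: "Qc c a" and Qb: "Qc c b" and aA: "a \<in> Aset c" and bA: "b \<in> Aset c" using a b by (simp_all add: PP_iff)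
  note fb = frame_basic[OF Qa Qb o]
  define \<phi> where "\<phi> y = (if y \<in> Aset c then comb u w (coef c a b y) else 0)" for y
  have dec: "comb a b (coef c a b y) = y" if "y \<in> Aset c" for y using decomp[OF a b nz o that] .
  have s1: "\<phi> (x + y) = \<phi> x + \<phi> y" if "x \<in> Aset c" "y \<in> Aset c" for x y
    using that by (simp add: \<phi>_def A_add coef_add comb_add)
  have s2: "\<phi> (omul x t) = omul (\<phi> x) t" if "x \<in> Aset c" "t \<in> Fsc c" for x t
  proof -
    note th = that
    obtain z where z: "t = ofC z" "FS c z" using th(2) by (auto simp: Fsc_eq)
    obtain t0 t1 t2 t3 where tt: "coef c a b x = (t0,t1,t2,t3)" by (cases "coef c a b x") auto
    have "\<phi> (omul x t) = \<phi> (sm x z)" using z by (simp add: sm_def)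
    also have "\<dots> = comb u w (t0*z,t1*z,t2*z,t3*z)" using th(1) z(2) tt by (simp add: \<phi>_def A_sm coef_sm)
    also have "\<dots> = sm (\<phi> x) z" using th(1) tt by (simp add: \<phi>_def comb_sm)
    finally show ?thesis using z by (simp add: sm_def)
  qed
  have na: "complex_of_real (norm u ^2) = complex_of_real (norm a ^2)" "complex_of_real (norm w ^2) = complex_of_real (norm b ^2)"
    using nu nw by simp_all
  have s3: "\<phi> (omul x y) = omul (\<phi> x) (\<phi> y)" if "x \<in> Aset c" "y \<in> Aset c" for x y
  proof -
    note th = that
    obtain t0 t1 t2 t3 where tt: "coef c a b x = (t0,t1,t2,t3)" by (cases "coef c a b x") auto
    obtain s0 s1 s2 s3 where ss: "coef c a b y = (s0,s1,s2,s3)" by (cases "coef c a b y") auto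
    have Ft: "FS4 c (t0,t1,t2,t3)" and Fs: "FS4 c (s0,s1,s2,s3)" using FS4_coef tt ss by metis+
    define m where "m = mu (complex_of_real (norm a ^2)) (complex_of_real (norm b ^2)) (t0,t1,t2,t3) (s0,s1,s2,s3)"
    have Fm: "FS4 c m" unfolding m_def by (rule FS4_mu[OF Ft Fs]) (simp_all del: of_real_power)
    have "omul x y = omul (comb a b (t0,t1,t2,t3)) (comb a b (s0,s1,s2,s3))"
      using dec[OF th(1)] dec[OF th(2)] tt ss by simp
    also have "\<dots> = comb a b m" unfolding m_def by (rule frame_mul[OF Qa Qb o Ft Fs])
    finally have xy: "omul x y = comb a b m" .
    have "\<phi> (omul x y) = comb u w (coef c a b (comb a b m))"
      using th xy A_mul[OF th] by (simp add: \<phi>_def)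
    also have "\<dots> = comb u w m" using coef_comb[OF Qa Qb o nz Fm] by simp
    also have "\<dots> = omul (comb u w (t0,t1,t2,t3)) (comb u w (s0,s1,s2,s3))"
      unfolding m_def frame_mul[OF Qu Qw ou Ft Fs] na ..
    also have "\<dots> = omul (\<phi> x) (\<phi> y)" using th tt ss by (simp add: \<phi>_def)
    finally show ?thesis .
  qed
  have s4: "hC c (\<phi> x) (\<phi> y) = hC c x y" if "x \<in> Aset c" "y \<in> Aset c" for x y
  proof -
    note th = that
    obtain t0 t1 t2 t3 where tt: "coef c a b x = (t0,t1,t2,t3)" by (cases "coef c a b x") auto
    obtain s0 s1 s2 s3 where ss: "coef c a b y = (s0,s1,s2,s3)" by (cases "coef c a b y") auto
    have Ft: "FS4 c (t0,t1,t2,t3)" and Fs: "FS4 c (s0,s1,s2,s3)" using FS4_coef tt ss by metis+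
    have "hC c (\<phi> x) (\<phi> y) = hC c (comb u w (t0,t1,t2,t3)) (comb u w (s0,s1,s2,s3))"
      using th tt ss by (simp add: \<phi>_def)
    also have "\<dots> = hC c (comb a b (t0,t1,t2,t3)) (comb a b (s0,s1,s2,s3))"
      unfolding comb_gram[OF Qu Qw ou Ft Fs] comb_gram[OF Qa Qb o Ft Fs] na ..
    also have "\<dots> = hC c x y" using dec[OF th(1)] dec[OF th(2)] tt ss by simp
    finally show ?thesis .
  qed
  have s5: "\<phi> x = 0" if "x \<notin> Aset c" for x using that by (simp add: \<phi>_def)
  have sh: "sharp c \<phi>" unfolding sharp_def ip_eq using s1 s2 s3 s4 s5 by auto
  have ca: "coef c a b a = (0,1,0,0)"
    using hC_ofC_Q[OF Qa, of 1] fb(4) o nz hC_sym[of c a b] hC_self[of c a]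
    by (simp add: coef_def)
  have cb: "coef c a b b = (0,0,1,0)"
    using hC_ofC_Q[OF Qb, of 1] fb(6) o nz hC_self[of c b]
    by (simp add: coef_def)
  have "\<phi> a = u" using aA ca by (simp add: \<phi>_def comb_def)
  moreover have "\<phi> b = w" using bA cb by (simp add: \<phi>_def comb_def)
  ultimately show ?thesis using sh by blast
qed


lemma ofC_eq_0[simp]: "ofC z = 0 \<longleftrightarrow> z = 0" by (simp add: ofC_c zero_c)

lemma line_repr: "line c x u = {(sm x z, sm u z) | z. FS c z \<and> z \<noteq> 0}"
  unfolding line_def Fsc_eq sm_def by (auto simp del: split_paired_Ex split_paired_All)

lemma pt_repr: "pt c y = {sm y z | z. FS c z}"
  unfolding pt_def Fsc_eq sm_def by (auto simp del: split_paired_Ex split_paired_All)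

lemma line_self: "(x, u) \<in> line c x u"
  unfolding line_repr by (rule CollectI, rule exI[of _ 1]) simp

lemma pt_self: "y \<in> pt c y"
  unfolding pt_repr by (rule CollectI, rule exI[of _ 1]) simp

lemma line_eq: "line c x u = line c x' u' \<Longrightarrow> \<exists>z. FS c z \<and> z \<noteq> 0 \<and> x' = sm x z \<and> u' = sm u z"
proof -
  assume "line c x u = line c x' u'"
  then have "(x', u') \<in> line c x u" using line_self[of x' u' c] by simp
  then show ?thesis unfolding line_repr by blast
qed

lemma pt_mem: "y \<in> pt c y' \<Longrightarrow> \<exists>z. FS c z \<and> y = sm y' z"
  unfolding pt_repr by blast

lemma line_scale: assumes "FS c z" "z \<noteq> 0" shows "line c (sm x z) (sm u z) = line c x u"
proof -
  have "{(sm (sm x z) s, sm (sm u z) s) | s. FS c s \<and> s \<noteq> 0} = {(sm x s, sm u s) | s. FS c s \<and> s \<noteq> 0}"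
  proof (intro set_eqI iffI)
    fix y assume "y \<in> {(sm (sm x z) s, sm (sm u z) s) | s. FS c s \<and> s \<noteq> 0}"
    then obtain s where "y = (sm (sm x z) s, sm (sm u z) s)" "FS c s" "s \<noteq> 0" by auto
    then show "y \<in> {(sm x s, sm u s) | s. FS c s \<and> s \<noteq> 0}" using assms
      by (auto simp: sm_sm intro!: exI[of _ "z * s"] FS_mult)
  next
    fix y assume "y \<in> {(sm x s, sm u s) | s. FS c s \<and> s \<noteq> 0}"
    then obtain s where y: "y = (sm x s, sm u s)" "FS c s" "s \<noteq> 0" by auto
    have "sm (sm x z) (s / z) = sm x s" "sm (sm u z) (s / z) = sm u s" using assms by (simp_all add: sm_sm)
    then show "y \<in> {(sm (sm x z) s, sm (sm u z) s) | s. FS c s \<and> s \<noteq> 0}" using assms y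
      by (auto intro!: exI[of _ "s / z"] FS_divide)
  qed
  then show ?thesis unfolding line_repr .
qed

lemma pt_scale: assumes "FS c z" "z \<noteq> 0" shows "pt c (sm y z) = pt c y"
proof -
  have "{sm (sm y z) s | s. FS c s} = {sm y s | s. FS c s}"
  proof (intro set_eqI iffI)
    fix x assume "x \<in> {sm (sm y z) s | s. FS c s}"
    then obtain s where "x = sm (sm y z) s" "FS c s" by auto
    then show "x \<in> {sm y s | s. FS c s}" using assms by (auto simp: sm_sm intro!: exI[of _ "z * s"] FS_mult)
  next
    fix x assume "x \<in> {sm y s | s. FS c s}"
    then obtain s where x: "x = sm y s" "FS c s" by auto
    have "sm (sm y z) (s / z) = sm y s" using assms by (simp add: sm_sm)
    then show "x \<in> {sm (sm y z) s | s. FS c s}" using assms x by (auto intro!: exI[of _ "s / z"] FS_divide)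
  qed
  then show ?thesis unfolding pt_repr .
qed

lemma IPL: assumes "inc_pl c P L" "L = line c x u" "P = pt c y" shows "hC c x y = 0"
proof -
  obtain x' u' y' where h: "L = line c x' u'" "P = pt c y'" "ip c x' y' = 0"
    using assms(1) unfolding inc_pl_def by blast
  obtain z where z: "FS c z" "z \<noteq> 0" "x' = sm x z" using line_eq[of c x u x' u'] h(1) assms(2) by auto
  obtain w where w: "FS c w" "y = sm y' w" using pt_mem[of y c y'] pt_self[of y c] h(2) assms(3) by auto
  have "hC c x' y = 0" using h(3) w by (simp add: ip_eq hC_sm_right)
  then show ?thesis using z by (simp add: hC_sm_left)
qed

lemma IPL_intro: "is_point c P \<Longrightarrow> is_line c L \<Longrightarrow> L = line c x u \<Longrightarrow> P = pt c y \<Longrightarrow> hC c x y = 0 \<Longrightarrow> inc_pl c P L"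
  unfolding inc_pl_def ip_eq by (metis ofC_0)

lemma PERP: assumes "perp c P Q" "P = pt c y" "Q = pt c y'" shows "hC c y y' = 0"
proof -
  obtain x0 y0 where h: "P = pt c x0" "Q = pt c y0" "ip c x0 y0 = 0" using assms(1) unfolding perp_def by blast
  obtain s where s: "FS c s" "y = sm x0 s" using pt_mem[of y c x0] pt_self[of y c] h(1) assms(2) by auto
  obtain s' where s': "FS c s'" "y' = sm y0 s'" using pt_mem[of y' c y0] pt_self[of y' c] h(2) assms(3) by auto
  show ?thesis using h(3) s s' by (simp add: ip_eq hC_sm_right hC_sm_left)
qed

lemma PERP_intro: "P = pt c y \<Longrightarrow> Q = pt c y' \<Longrightarrow> hC c y y' = 0 \<Longrightarrow> perp c P Q"
  unfolding perp_def ip_eq by (metis ofC_0)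

lemma ILP: assumes "inc_lp c L \<phi>" "L = line c x u" "x \<in> Aset c" shows "\<phi> x = u"
proof -
  have sh: "sharp c \<phi>" using assms(1) by (simp add: inc_lp_def)
  obtain x' u' where h: "L = line c x' u'" "\<phi> x' = u'" using assms(1) unfolding inc_lp_def by blast
  obtain z where z: "FS c z" "z \<noteq> 0" "x' = sm x z" "u' = sm u z" using line_eq[of c x u x' u'] h(1) assms(2) by auto
  have "sm (\<phi> x) z = sm u z" using sharp_sm[OF sh assms(3) z(1)] h(2) z by simp
  then have "sm (sm (\<phi> x) z) (1/z) = sm (sm u z) (1/z)" by simp
  then show ?thesis using z(2) by (simp add: sm_sm)
qed

lemma ILP_intro: "is_line c L \<Longrightarrow> sharp c \<phi> \<Longrightarrow> L = line c x u \<Longrightarrow> \<phi> x = u \<Longrightarrow> inc_lp c L \<phi>"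
  unfolding inc_lp_def by blast

lemma is_point_E: assumes "is_point c P" obtains y where "y \<in> PP c" "y \<noteq> 0" "P = pt c y"
  using assms unfolding is_point_def by blast

lemma is_line_E: assumes "is_line c L" obtains x u where "x \<in> PP c" "Qc c u" "norm x = norm u" "x \<noteq> 0" "L = line c x u"
  using assms unfolding is_line_def QQ_iff by blast

lemma is_point_I: "y \<in> PP c \<Longrightarrow> y \<noteq> 0 \<Longrightarrow> is_point c (pt c y)"
  unfolding is_point_def by blast

lemma is_line_I: "x \<in> PP c \<Longrightarrow> Qc c u \<Longrightarrow> norm x = norm u \<Longrightarrow> x \<noteq> 0 \<Longrightarrow> is_line c (line c x u)"
  unfolding is_line_def QQ_iff by blast


lemma scaleR_ofC: "scaleR r (ofC w) = ofC (of_real r * w)"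
  by (simp add: ofC_c scaleR_conv_of_real)

lemma linv_val: assumes "e \<noteq> 0" "X \<noteq> 0" "Y \<noteq> 0"
  shows "linv c (line c e X) (line c e Y) = scaleR (1/(norm X * norm Y)) (ip c X Y)"
  unfolding linv_def
proof (rule some_equality)
  show "\<exists>a u v. line c e X = line c a u \<and> line c e Y = line c a v \<and>
      scaleR (1/(norm X * norm Y)) (ip c X Y) = scaleR (1 / (norm u * norm v)) (ip c u v)" by blast
next
  fix l assume "\<exists>a u v. line c e X = line c a u \<and> line c e Y = line c a v \<and> l = scaleR (1 / (norm u * norm v)) (ip c u v)"
  then obtain a' u' v' where h: "line c e X = line c a' u'" "line c e Y = line c a' v'"
    "l = scaleR (1 / (norm u' * norm v')) (ip c u' v')" by blast
  obtain z where z: "FS c z" "z \<noteq> 0" "a' = sm e z" "u' = sm X z" using line_eq[OF h(1)] by blast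
  obtain z' where z': "FS c z'" "z' \<noteq> 0" "a' = sm e z'" "v' = sm Y z'" using line_eq[OF h(2)] by blast
  have zz: "z' = z" using sm_cancel[OF assms(1)] z z' by metis
  have cz: "cnj z * z = complex_of_real (cmod z ^2)" by (metis complex_norm_square mult.commute)
  have "l = scaleR (1 / (norm X * cmod z * (norm Y * cmod z))) (ofC (cnj z * hC c X Y * z))"
    using h(3) z z' zz by (simp add: norm_sm ip_eq hC_sm_left hC_sm_right mult.assoc)
  also have "\<dots> = ofC (complex_of_real (1 / (norm X * cmod z * (norm Y * cmod z))) * (complex_of_real (cmod z ^2) * hC c X Y))"
    unfolding scaleR_ofC cz[symmetric] by (simp add: ac_simps)
  also have "\<dots> = ofC (complex_of_real (1 / (norm X * norm Y)) * hC c X Y)"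
    using z(2) assms(2,3) by (simp add: field_simps power2_eq_square)
  finally show "l = scaleR (1/(norm X * norm Y)) (ip c X Y)" by (simp add: scaleR_ofC ip_eq)
qed

lemma PP_diff_sm: "x \<in> PP c \<Longrightarrow> y \<in> PP c \<Longrightarrow> FS c t \<Longrightarrow> x - sm y t \<in> PP c"
  by (simp add: PP_iff A_diff A_sm Qc_diff Qc_sm)

lemma Lp_the:
  assumes sh: "sharp c \<phi>" and P: "a \<in> PP c" "p0 \<in> PP c" "e \<in> PP c" and nz: "a \<noteq> 0" "p0 \<noteq> 0" "e \<noteq> 0"
    and o: "hC c a p0 = 0" "hC c a e = 0" "hC c p0 e = 0"
  shows "(THE L'. inc_lp c L' \<phi> \<and> inc_pl c (pt c p0) L' \<and> inc_pl c (pt c a) L') = line c e (\<phi> e)"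
proof (rule the_equality)
  have eA: "e \<in> Aset c" using P(3) by (simp add: PP_iff)
  have il: "is_line c (line c e (\<phi> e))"
    using is_line_I[OF P(3) sharp_Q[OF sh P(3)] _ nz(3)] sharp_norm[OF sh eA] by simp
  have o': "hC c e p0 = 0" "hC c e a = 0" using o hC_sym by (metis complex_cnj_zero)+
  show "inc_lp c (line c e (\<phi> e)) \<phi> \<and> inc_pl c (pt c p0) (line c e (\<phi> e)) \<and> inc_pl c (pt c a) (line c e (\<phi> e))"
    using ILP_intro[OF il sh refl refl] IPL_intro[OF is_point_I[OF P(2) nz(2)] il refl refl o'(1)]
      IPL_intro[OF is_point_I[OF P(1) nz(1)] il refl refl o'(2)] by blast
next
  fix L'' assume h: "inc_lp c L'' \<phi> \<and> inc_pl c (pt c p0) L'' \<and> inc_pl c (pt c a) L''"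
  have eA: "e \<in> Aset c" using P(3) by (simp add: PP_iff)
  have "is_line c L''" using h unfolding inc_lp_def by blast
  then obtain x u where x: "x \<in> PP c" "Qc c u" "norm x = norm u" "x \<noteq> 0" "L'' = line c x u" by (rule is_line_E)
  have xA: "x \<in> Aset c" using x(1) by (simp add: PP_iff)
  have fx: "\<phi> x = u" using ILP[OF _ x(5) xA] h by blast
  have hxp: "hC c x p0 = 0" using IPL[OF _ x(5) refl] h by blast
  have hxa: "hC c x a = 0" using IPL[OF _ x(5) refl] h by blast
  define ne where "ne = complex_of_real (norm e ^2)"
  have ne: "ne \<noteq> 0" "hC c e e = ne" using nz(3) by (simp_all add: ne_def hC_self)
  define t where "t = hC c e x / ne"
  have ft: "FS c t" unfolding t_def ne_def by (simp add: FS_divide FS_hC del: of_real_power)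
  define y where "y = x - sm e t"
  have yP: "y \<in> PP c" unfolding y_def using x(1) P(3) ft by (rule PP_diff_sm)
  have y1: "hC c a y = 0" unfolding y_def using hxa o ft hC_sym[of c a x]
    by (simp add: hC_diff_right hC_sm_right)
  have y2: "hC c p0 y = 0" unfolding y_def using hxp o ft hC_sym[of c p0 x]
    by (simp add: hC_diff_right hC_sm_right)
  have y3: "hC c e y = 0" unfolding y_def using ft ne by (simp add: hC_diff_right hC_sm_right t_def)
  have "y = 0" by (rule Zlem[OF P nz o yP y1 y2 y3])
  then have xe: "x = sm e t" unfolding y_def by simp
  have t0: "t \<noteq> 0" using xe x(4) by auto
  have "L'' = line c (sm e t) (sm (\<phi> e) t)" using x(5) fx xe sharp_sm[OF sh eA ft] by simp
  then show "L'' = line c e (\<phi> e)" using line_scale[OF ft t0] by simp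
qed

lemma hC_from_inner: "inner x y = 0 \<Longrightarrow> inner (sm x \<i>) y = 0 \<Longrightarrow> hC c x y = 0"
  by (cases x rule: oct_cases; cases y rule: oct_cases; cases c)
     (auto simp: hC_c sm_c inner_c inner_complex_def complex_eq_iff algebra_simps)

lemma w_exists: assumes "r \<ge> 0" shows "\<exists>w. Qc c w \<and> hC c u w = 0 \<and> hC c v w = 0 \<and> norm w = r"
proof -
  define S where "S = set [ofC 1, ofC \<i>, u, sm u \<i>, v, sm v \<i>]"
  have fS: "finite S" by (simp add: S_def)
  have "dim S \<le> card S" using dim_le_card[OF span_superset fS] .
  also have "card S \<le> 6" unfolding S_def using card_length[of "[ofC 1, ofC \<i>, u, sm u \<i>, v, sm v \<i>]"] by simp
  finally have "dim S < DIM(oct)" by simp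
  then obtain w0 where w0: "w0 \<noteq> 0" "\<And>y. y \<in> span S \<Longrightarrow> orthogonal w0 y"
    using orthogonal_to_subspace_exists by blast
  have o: "\<And>y. y \<in> S \<Longrightarrow> inner y w0 = 0" using w0(2) span_base
    by (metis orthogonal_def inner_commute)
  have "fst (fst w0) = 0"
  proof -
    have "inner (ofC 1) w0 = 0" "inner (ofC \<i>) w0 = 0" using o by (auto simp: S_def)
    then show ?thesis by (cases w0 rule: oct_cases) (simp add: ofC_c inner_complex_def complex_eq_iff)
  qed
  then have Q: "Qc c w0" by (cases c) (simp_all add: Qc_def)
  have hu: "hC c u w0 = 0" using o by (intro hC_from_inner) (auto simp: S_def)
  have hv: "hC c v w0 = 0" using o by (intro hC_from_inner) (auto simp: S_def)
  define w where "w = sm w0 (of_real (r / norm w0))"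
  have "Qc c w" unfolding w_def by (rule Qc_sm[OF Q FS_ofreal])
  moreover have "hC c u w = 0" "hC c v w = 0" unfolding w_def hC_sm_right[OF FS_ofreal] using hu hv by simp_all
  moreover have "norm w = r" unfolding w_def norm_sm norm_of_real using w0(1) assms by simp
  ultimately show ?thesis by blast
qed


theorem mainTheorem12:
  fixes c :: FA and p q :: "oct set" and L M :: "(oct \<times> oct) set"
  assumes "primitive c p L q M"
    and "\<not> degenerate p L q M"
    and "\<not> perp c p q"
  shows "\<exists>N. admissible c p L q M N \<and>
           (case orth_shift c p L q M N of (L', r, M') \<Rightarrow> linv c L' M' \<noteq> ofR (-1))"
proof -
  have pr: "is_point c p" "is_point c q" "is_line c L" "is_line c M" "inc_pl c p L" "inc_pl c q L"
    "inc_pl c q M" "inc_pl c p M" using assms(1) unfolding primitive_def by blast+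
  obtain p0 where p0: "p0 \<in> PP c" "p0 \<noteq> 0" "p = pt c p0" using pr(1) by (rule is_point_E)
  obtain q0 where q0: "q0 \<in> PP c" "q0 \<noteq> 0" "q = pt c q0" using pr(2) by (rule is_point_E)
  obtain a u where L: "a \<in> PP c" "Qc c u" "norm a = norm u" "a \<noteq> 0" "L = line c a u" using pr(3) by (rule is_line_E)
  obtain a2 v2 where M: "a2 \<in> PP c" "Qc c v2" "norm a2 = norm v2" "a2 \<noteq> 0" "M = line c a2 v2" using pr(4) by (rule is_line_E)
  have aA: "a \<in> Aset c" using L(1) by (simp add: PP_iff)
  have hap: "hC c a p0 = 0" using IPL[OF pr(5) L(5) p0(3)] .
  have haq: "hC c a q0 = 0" using IPL[OF pr(6) L(5) q0(3)] .
  have ha2q: "hC c a2 q0 = 0" using IPL[OF pr(7) M(5) q0(3)] .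
  have ha2p: "hC c a2 p0 = 0" using IPL[OF pr(8) M(5) p0(3)] .
  have npq: "hC c p0 q0 \<noteq> 0" using assms(3) PERP_intro[OF p0(3) q0(3)] by blast
  have pq: "p \<noteq> q" using assms(2) by (simp add: degenerate_def)
  have sym0: "\<And>x y. hC c x y = 0 \<Longrightarrow> hC c y x = 0" by (metis complex_cnj_zero hC_sym)
  define np where "np = complex_of_real (norm p0 ^2)"
  have np: "np \<noteq> 0" "hC c p0 p0 = np" using p0(2) by (simp_all add: np_def hC_self)
  define nq where "nq = complex_of_real (norm q0 ^2)"
  have nq: "nq \<noteq> 0" "hC c q0 q0 = nq" using q0(2) by (simp_all add: nq_def hC_self)
  define na where "na = complex_of_real (norm a ^2)"
  have na: "na \<noteq> 0" "hC c a a = na" using L(4) by (simp_all add: na_def hC_self)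
  define k where "k = hC c p0 q0 / np"
  have fk: "FS c k" unfolding k_def np_def by (simp add: FS_divide FS_hC del: of_real_power)
  have k0: "k \<noteq> 0" using npq np by (simp add: k_def)
  define e where "e = q0 - sm p0 k"
  have eP: "e \<in> PP c" unfolding e_def using q0(1) p0(1) fk by (rule PP_diff_sm)
  have eA: "e \<in> Aset c" using eP by (simp add: PP_iff)
  have hpe: "hC c p0 e = 0" unfolding e_def using fk np by (simp add: hC_diff_right hC_sm_right k_def)
  have hae: "hC c a e = 0" unfolding e_def using fk hap haq by (simp add: hC_diff_right hC_sm_right)
  have e0: "e \<noteq> 0"
  proof
    assume "e = 0"
    then have "q0 = sm p0 k" unfolding e_def by simp
    then have "q = p" using q0(3) p0(3) pt_scale[OF fk k0] by simp
    then show False using pq by simp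
  qed
  define t where "t = hC c a a2 / na"
  have ft: "FS c t" unfolding t_def na_def by (simp add: FS_divide FS_hC del: of_real_power)
  define y1 where "y1 = a2 - sm a t"
  have y1P: "y1 \<in> PP c" unfolding y1_def using M(1) L(1) ft by (rule PP_diff_sm)
  have y1a: "hC c a y1 = 0" unfolding y1_def using ft na by (simp add: hC_diff_right hC_sm_right t_def)
  have y1p: "hC c p0 y1 = 0" unfolding y1_def using ft sym0[OF ha2p] sym0[OF hap]
    by (simp add: hC_diff_right hC_sm_right)
  have y1q: "hC c q0 y1 = 0" unfolding y1_def using ft sym0[OF ha2q] sym0[OF haq]
    by (simp add: hC_diff_right hC_sm_right)
  have y1e: "hC c e y1 = 0" unfolding e_def using y1p y1q fk by (simp add: hC_diff_left hC_sm_left)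
  have "y1 = 0" by (rule Zlem[OF L(1) p0(1) eP L(4) p0(2) e0 hap hae hpe y1P y1a y1p y1e])
  then have a2t: "a2 = sm a t" unfolding y1_def by simp
  have t0: "t \<noteq> 0" using a2t M(4) by auto
  define v where "v = sm v2 (1/t)"
  have fti: "FS c (1/t)" using ft by (simp add: FS_divide)
  have Qv: "Qc c v" unfolding v_def using M(2) fti by (rule Qc_sm)
  have vt: "sm v t = v2" unfolding v_def using t0 by (simp add: sm_sm)
  have Mv: "M = line c a v" using M(5) a2t vt line_scale[OF ft t0, of a v] by simp
  have nv: "norm v = norm a"
  proof -
    have "norm v2 = norm a * cmod t" using M(3) a2t by (simp add: norm_sm)
    then show ?thesis unfolding v_def using t0 by (simp add: norm_sm norm_divide)
  qed
  define k' where "k' = hC c q0 p0 / nq"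
  have fk': "FS c k'" unfolding k'_def nq_def by (simp add: FS_divide FS_hC del: of_real_power)
  have k'0: "k' \<noteq> 0" using npq nq hC_sym[of c q0 p0] by (simp add: k'_def)
  define b where "b = p0 - sm q0 k'"
  have bP: "b \<in> PP c" unfolding b_def using p0(1) q0(1) fk' by (rule PP_diff_sm)
  have bA: "b \<in> Aset c" using bP by (simp add: PP_iff)
  have hqb: "hC c q0 b = 0" unfolding b_def using fk' nq by (simp add: hC_diff_right hC_sm_right k'_def)
  have hab: "hC c a b = 0" unfolding b_def using fk' hap haq by (simp add: hC_diff_right hC_sm_right)
  have hbq: "hC c b q0 = 0" using sym0[OF hqb] .
  have b0: "b \<noteq> 0"
  proof
    assume "b = 0"
    then have "p0 = sm q0 k'" unfolding b_def by simp
    then have "p = q" using q0(3) p0(3) pt_scale[OF fk' k'0] by simp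
    then show False using pq by simp
  qed
  define nb where "nb = complex_of_real (norm b ^2)"
  have nb: "nb \<noteq> 0" "hC c b b = nb" using b0 by (simp_all add: nb_def hC_self)
  have p0b: "p0 = b + sm q0 k'" unfolding b_def by simp
  have hbp: "hC c b p0 = nb" unfolding p0b using fk' hbq nb by (simp add: hC_add_right hC_sm_right)
  have hbe: "hC c b e \<noteq> 0" unfolding e_def using fk hbq hbp nb k0 by (simp add: hC_diff_right hC_sm_right)
  obtain w where w: "Qc c w" "hC c u w = 0" "hC c v w = 0" "norm w = norm b" using w_exists[of "norm b" c u v] by auto
  obtain \<xi> where xi: "sharp c \<xi>" "\<xi> a = u" "\<xi> b = w"
    using sharp_exists[OF L(1) bP L(4) b0 hab L(2) w(1) w(2) L(3)[symmetric] w(4)] by blast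
  obtain \<psi> where ch: "sharp c \<psi>" "\<psi> a = v" "\<psi> b = w"
    using sharp_exists[OF L(1) bP L(4) b0 hab Qv w(1) w(3) nv w(4)] by blast
  define N where "N = line c b w"
  have isN: "is_line c N" unfolding N_def using is_line_I[OF bP w(1) _ b0] w(4) by simp
  have qN: "inc_pl c q N" using IPL_intro[OF pr(2) isN N_def q0(3) hbq] .
  have xiN: "inc_lp c N \<xi>" using ILP_intro[OF isN xi(1) N_def xi(3)] .
  have xiL: "inc_lp c L \<xi>" using ILP_intro[OF pr(3) xi(1) L(5) xi(2)] .
  have chN: "inc_lp c N \<psi>" using ILP_intro[OF isN ch(1) N_def ch(3)] .
  have chM: "inc_lp c M \<psi>" using ILP_intro[OF pr(4) ch(1) Mv ch(2)] .
  have adm: "admissible c p L q M N" unfolding admissible_def coplanar_def using isN qN xiN xiL chN chM by blast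
  have hba: "hC c b a = 0" using sym0[OF hab] .
  have hpa: "hC c p0 a = 0" using sym0[OF hap] .
  have rr: "(THE r. inc_pl c r N \<and> perp c p r) = pt c a"
  proof (rule the_equality)
    show "inc_pl c (pt c a) N \<and> perp c p (pt c a)"
      using IPL_intro[OF is_point_I[OF L(1) L(4)] isN N_def refl hba] PERP_intro[OF p0(3) refl hpa] by blast
  next
    fix r assume h: "inc_pl c r N \<and> perp c p r"
    then have "is_point c r" unfolding inc_pl_def by blast
    then obtain y where y: "y \<in> PP c" "y \<noteq> 0" "r = pt c y" by (rule is_point_E)
    have hby: "hC c b y = 0" using IPL[OF _ N_def y(3)] h by blast
    have hpy: "hC c p0 y = 0" using PERP[OF _ p0(3) y(3)] h by blast
    have "hC c b y = hC c p0 y - cnj k' * hC c q0 y" unfolding b_def using fk' by (simp add: hC_diff_left hC_sm_left)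
    then have hqy: "hC c q0 y = 0" using hby hpy k'0 by simp
    define s where "s = hC c a y / na"
    have fs: "FS c s" unfolding s_def na_def by (simp add: FS_divide FS_hC del: of_real_power)
    define z where "z = y - sm a s"
    have zP: "z \<in> PP c" unfolding z_def using y(1) L(1) fs by (rule PP_diff_sm)
    have za: "hC c a z = 0" unfolding z_def using fs na by (simp add: hC_diff_right hC_sm_right s_def)
    have zb: "hC c b z = 0" unfolding z_def using fs hby hba by (simp add: hC_diff_right hC_sm_right)
    have zq: "hC c q0 z = 0" unfolding z_def using fs hqy sym0[OF haq] by (simp add: hC_diff_right hC_sm_right)
    have "z = 0" by (rule Zlem[OF L(1) bP q0(1) L(4) b0 q0(2) hab haq hbq zP za zb zq])
    then have ys: "y = sm a s" unfolding z_def by simp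
    have s0: "s \<noteq> 0" using ys y(2) by auto
    show "r = pt c a" using y(3) ys pt_scale[OF fs s0] by simp
  qed
  have xx: "(THE xi. inc_lp c N xi \<and> inc_lp c L xi) = \<xi>"
  proof (rule the_equality)
    show "inc_lp c N \<xi> \<and> inc_lp c L \<xi>" using xiN xiL by blast
  next
    fix \<xi>' assume h: "inc_lp c N \<xi>' \<and> inc_lp c L \<xi>'"
    have sh: "sharp c \<xi>'" using h unfolding inc_lp_def by blast
    have "\<xi>' b = w" using ILP[OF _ N_def bA] h by blast
    moreover have "\<xi>' a = u" using ILP[OF _ L(5) aA] h by blast
    ultimately show "\<xi>' = \<xi>" using sharp_uniq[OF sh xi(1) L(1) bP L(4) b0 hab] xi by simp
  qed
  have cc: "(THE ch. inc_lp c N ch \<and> inc_lp c M ch) = \<psi>"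
  proof (rule the_equality)
    show "inc_lp c N \<psi> \<and> inc_lp c M \<psi>" using chN chM by blast
  next
    fix pp' assume h: "inc_lp c N pp' \<and> inc_lp c M pp'"
    have sh: "sharp c pp'" using h unfolding inc_lp_def by blast
    have "pp' b = w" using ILP[OF _ N_def bA] h by blast
    moreover have "pp' a = v" using ILP[OF _ Mv aA] h by blast
    ultimately show "pp' = \<psi>" using sharp_uniq[OF sh ch(1) L(1) bP L(4) b0 hab] ch by simp
  qed
  have L1: "(THE L'. inc_lp c L' \<xi> \<and> inc_pl c p L' \<and> inc_pl c (pt c a) L') = line c e (\<xi> e)"
    using Lp_the[OF xi(1) L(1) p0(1) eP L(4) p0(2) e0 hap hae hpe] p0(3) by simp
  have M1: "(THE M'. inc_lp c M' \<psi> \<and> inc_pl c p M' \<and> inc_pl c (pt c a) M') = line c e (\<psi> e)"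
    using Lp_the[OF ch(1) L(1) p0(1) eP L(4) p0(2) e0 hap hae hpe] p0(3) by simp
  have os: "orth_shift c p L q M N = (line c e (\<xi> e), pt c a, line c e (\<psi> e))"
    unfolding orth_shift_def shift_def Let_def rr xx cc L1 M1 ..
  define X where "X = \<xi> e"
  define Y where "Y = \<psi> e"
  have nX: "norm X = norm e" "norm Y = norm e" unfolding X_def Y_def using sharp_norm xi(1) ch(1) eA by blast+
  have X0: "X \<noteq> 0" "Y \<noteq> 0" using nX e0 by auto
  have lv: "linv c (line c e X) (line c e Y) \<noteq> ofR (-1)"
  proof
    assume "linv c (line c e X) (line c e Y) = ofR (-1)"
    then have "ofC (complex_of_real (1 / (norm e * norm e)) * hC c X Y) = ofC (-1)"
      unfolding linv_val[OF e0 X0] nX ip_eq scaleR_ofC ofR_eq by simp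
    then have hXY: "hC c X Y = - complex_of_real (norm e * norm e)" using e0 by (simp add: field_simps)
    have "hC c (X + Y) (X + Y) = hC c X X + hC c X Y + (hC c Y X + hC c Y Y)"
      by (simp add: hC_add_left hC_add_right)
    also have "\<dots> = 0" using hXY hC_sym[of c Y X] nX by (simp add: hC_self power2_eq_square)
    finally have "X + Y = 0" by (simp add: hC_self)
    then have YX: "Y = - X" by (simp add: eq_neg_iff_add_eq_0 add.commute)
    have "hC c w X = hC c b e" unfolding X_def using sharp_hC[OF xi(1) bA eA] xi(3) by simp
    moreover have "hC c w Y = hC c b e" unfolding Y_def using sharp_hC[OF ch(1) bA eA] ch(3) by simp
    ultimately have "hC c b e = - hC c b e" using YX by (simp add: hC_minus_right)
    then show False using hbe by simp
  qed
  show ?thesis using adm os lv X_def Y_def by auto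
qed


end
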